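(* Let $p$ be a power series with infinite radius of convergence and define $r_1(x)=-\frac1c\big((a+bx)p(x)+\frac12c^2p'(x)\big)$ and $r_2(x)=\frac1c\int_0^xp(y)dy$, which have infinite radius of convergence. Then for any continuously differentiable $h:[0,T]\to\mathbb{C}$ and $t\le T$, \[ \int_t^Th(s)p(X_s)dW_s=\int_t^T\big(h(s)r_1(X_s)-h'(s)r_2(X_s)\big)ds+h(T)r_2(X_T)-h(t)r_2(X_t). \]
   Context: $W$ is a Brownian motion, $a,b\in\mathbb{R}$, $c\ne0$, $T>0$, and $X$ solves $dX_t=(a+bX_t)dt+c\,dW_t$, $X_0\in\mathbb{R}$. *)

theory Defs
  imports "HOL-Probability.Probability"
begin

text \<open>Standard one-dimensional Brownian motion on a probability space M
  (time parameter t \<ge> 0; values at negative times are irrelevant).\<close>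
definition brownian_motion :: "'a measure \<Rightarrow> (real \<Rightarrow> 'a \<Rightarrow> real) \<Rightarrow> bool" where
  "brownian_motion M W \<longleftrightarrow>
     prob_space M \<and>
     (\<forall>t\<ge>0. W t \<in> borel_measurable M) \<and>
     (\<forall>\<omega>\<in>space M. W 0 \<omega> = 0 \<and> continuous_on {0..} (\<lambda>t. W t \<omega>)) \<and>
     (\<forall>s t. 0 \<le> s \<and> s < t \<longrightarrow>
        distributed M lborel (\<lambda>\<omega>. W t \<omega> - W s \<omega>)
          (\<lambda>x. ennreal (normal_density 0 (sqrt (t - s)) x))) \<and>
     (\<forall>(ts :: nat \<Rightarrow> real) n. 0 \<le> ts 0 \<and> (\<forall>i<n. ts i < ts (Suc i)) \<longrightarrow>
        prob_space.indep_vars M (\<lambda>_. borel) (\<lambda>i \<omega>. W (ts (Suc i)) \<omega> - W (ts i) \<omega>) {..<n})"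

definition is_partition :: "(nat \<Rightarrow> real) \<Rightarrow> nat \<Rightarrow> real \<Rightarrow> real \<Rightarrow> bool" where
  "is_partition \<tau> n t T \<longleftrightarrow> \<tau> 0 = t \<and> \<tau> n = T \<and> (\<forall>i<n. \<tau> i < \<tau> (Suc i))"

definition ito_sum ::
  "(real \<Rightarrow> 'a \<Rightarrow> real) \<Rightarrow> (real \<Rightarrow> 'a \<Rightarrow> complex) \<Rightarrow> (nat \<Rightarrow> real) \<Rightarrow> nat \<Rightarrow> 'a \<Rightarrow> complex" where
  "ito_sum W H \<tau> n \<omega> = (\<Sum>i<n. H (\<tau> i) \<omega> * complex_of_real (W (\<tau> (Suc i)) \<omega> - W (\<tau> i) \<omega>))"

text \<open>I is the Ito integral of the (continuous, adapted) integrand H over [t,T] w.r.t. W: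
  the left-point Riemann sums converge to I in probability as the mesh tends to 0.\<close>
definition has_ito_integral ::
  "'a measure \<Rightarrow> (real \<Rightarrow> 'a \<Rightarrow> real) \<Rightarrow> (real \<Rightarrow> 'a \<Rightarrow> complex) \<Rightarrow> real \<Rightarrow> real \<Rightarrow> ('a \<Rightarrow> complex) \<Rightarrow> bool" where
  "has_ito_integral M W H t T I \<longleftrightarrow>
     I \<in> borel_measurable M \<and> (\<forall>s\<in>{t..T}. H s \<in> borel_measurable M) \<and>
     (\<forall>\<epsilon>>0. \<exists>\<delta>>0. \<forall>\<tau> n. is_partition \<tau> n t T \<and> (\<forall>i<n. \<tau> (Suc i) - \<tau> i < \<delta>) \<longrightarrow>
        measure M {\<omega>\<in>space M. \<epsilon> \<le> cmod (ito_sum W H \<tau> n \<omega> - I \<omega>)} \<le> \<epsilon>)"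

definition pseries :: "(nat \<Rightarrow> complex) \<Rightarrow> real \<Rightarrow> complex" where
  "pseries \<alpha> x = (\<Sum>n. \<alpha> n * complex_of_real x ^ n)"

end

theory Submission
  imports Defs
begin

lemma ps_summable: "conv_radius \<beta> = \<infinity> \<Longrightarrow> summable (\<lambda>n. \<beta> n * z ^ n)"
  for z :: complex by (rule summable_in_conv_radius) simp

lemma ps_abs_summable: "conv_radius \<beta> = \<infinity> \<Longrightarrow> summable (\<lambda>n. norm (\<beta> n * z ^ n))"
  for z :: complex by (rule abs_summable_in_conv_radius) simp

lemma ps_diffs_rad: "conv_radius \<beta> = \<infinity> \<Longrightarrow> conv_radius (diffs \<beta>) = (\<infinity> :: ereal)"
  for \<beta> :: "nat \<Rightarrow> complex"
  by (rule conv_radius_inftyI'', rule termdiff_converges_all, rule ps_summable)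

lemma ps_deriv:
  fixes \<beta> :: "nat \<Rightarrow> complex"
  assumes "conv_radius \<beta> = \<infinity>"
  shows "(pseries \<beta> has_vector_derivative pseries (diffs \<beta>) x) (at x within S)"
proof -
  have d: "((\<lambda>z. \<Sum>n. \<beta> n * z^n) has_field_derivative (\<Sum>n. diffs \<beta> n * (complex_of_real x)^n)) (at (complex_of_real x))"
    by (rule termdiffs_strong_converges_everywhere) (rule ps_summable[OF assms])
  have o: "(complex_of_real has_vector_derivative 1) (at x)"
    using has_vector_derivative_of_real[of "\<lambda>x. x" 1 "at x"] by (simp add: DERIV_ident)
  have "((\<lambda>z. \<Sum>n. \<beta> n * z^n) \<circ> complex_of_real has_vector_derivative 1 * (\<Sum>n. diffs \<beta> n * (complex_of_real x)^n)) (at x)"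
    by (rule field_vector_diff_chain_at[OF o d])
  then have "(pseries \<beta> has_vector_derivative pseries (diffs \<beta>) x) (at x)"
    by (simp add: pseries_def[abs_def] comp_def o_def)
  then show ?thesis by (rule has_vector_derivative_at_within)
qed

lemma ps_vd: "conv_radius \<beta> = \<infinity> \<Longrightarrow> vector_derivative (pseries \<beta>) (at x) = pseries (diffs \<beta>) x"
  by (rule vector_derivative_at, rule ps_deriv)

lemma ps_cont: "conv_radius \<beta> = \<infinity> \<Longrightarrow> continuous_on S (pseries \<beta>)"
  by (meson has_vector_derivative_continuous continuous_at_imp_continuous_on ps_deriv)

definition "antid \<alpha> = (\<lambda>n. if n = 0 then 0 else \<alpha> (n - 1) / of_nat n :: complex)"

lemma antid_rad:
  assumes "conv_radius \<alpha> = \<infinity>" shows "conv_radius (antid \<alpha>) = \<infinity>"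
proof (rule conv_radius_inftyI'')
  fix z :: complex
  have s: "summable (\<lambda>n. norm z * norm (\<alpha> n * z ^ n))"
    by (intro summable_mult ps_abs_summable assms)
  have "summable (\<lambda>n. antid \<alpha> (Suc n) * z ^ (Suc n))"
  proof (rule summable_comparison_test'[OF s])
    fix n :: nat assume "n \<ge> 0"
    have nn: "norm (of_nat (Suc n) :: complex) = real (Suc n)" by (rule norm_of_nat)
    have "norm (antid \<alpha> (Suc n) * z ^ Suc n) = norm (\<alpha> n) / (Suc n) * (norm z * norm z ^ n)"
      using nn by (simp add: antid_def norm_mult norm_divide norm_power del: of_nat_Suc)
    also have "\<dots> \<le> norm (\<alpha> n) * (norm z * norm z ^ n)"
      by (intro mult_right_mono) (auto simp: divide_le_eq intro!: mult_le_cancel_left1[THEN iffD2])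
    finally show "norm (antid \<alpha> (Suc n) * z ^ Suc n) \<le> norm z * norm (\<alpha> n * z ^ n)"
      by (simp add: norm_mult norm_power algebra_simps)
  qed
  then show "summable (\<lambda>n. antid \<alpha> n * z ^ n)"
    using summable_Suc_iff[of "\<lambda>n. antid \<alpha> n * z ^ n"] by (simp del: power_Suc)
qed

lemma diffs_antid: "diffs (antid \<alpha>) = \<alpha>"
  by (auto simp: diffs_def antid_def fun_eq_iff simp del: of_nat_Suc)

lemma antid_zero: "pseries (antid \<alpha>) 0 = 0"
proof -
  have "(\<lambda>n. antid \<alpha> n * complex_of_real 0 ^ n) = (\<lambda>n. 0)" by (auto simp: antid_def fun_eq_iff)
  then show ?thesis by (simp add: pseries_def)
qed

lemma pseries_scale: "conv_radius \<beta> = \<infinity> \<Longrightarrow> pseries (\<lambda>n. k * \<beta> n) x = k * pseries \<beta> x"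
  unfolding pseries_def
  by (subst suminf_mult[symmetric]) (auto intro: ps_summable simp: mult.assoc)


lemma r2_char:
  fixes \<alpha> :: "nat \<Rightarrow> complex" and c :: real
  assumes rad: "conv_radius \<alpha> = \<infinity>"
  shows "interval_lebesgue_integral lborel (ereal 0) (ereal x) (pseries \<alpha>) = pseries (antid \<alpha>) x"
proof -
  have "interval_lebesgue_integral lborel (ereal 0) (ereal x) (pseries \<alpha>) = pseries (antid \<alpha>) x - pseries (antid \<alpha>) 0"
  proof -
    have c1: "continuous_on {min 0 x..max 0 x} (pseries \<alpha>)" by (rule ps_cont[OF rad])
    have d1: "\<And>y. min 0 x \<le> y \<Longrightarrow> y \<le> max 0 x \<Longrightarrow> (pseries (antid \<alpha>) has_vector_derivative pseries \<alpha> y) (at y within {min 0 x..max 0 x})"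
      using ps_deriv[OF antid_rad[OF rad]] by (simp add: diffs_antid)
    show ?thesis using interval_integral_FTC_finite[OF c1 d1] by simp
  qed
  then show ?thesis by (simp add: antid_zero)
qed

lemma shift_sums:
  fixes \<alpha> :: "nat \<Rightarrow> complex"
  assumes rad: "conv_radius \<alpha> = \<infinity>"
  shows "(\<lambda>n. (if n = 0 then 0 else \<alpha> (n - 1)) * z ^ n) sums (z * (\<Sum>n. \<alpha> n * z ^ n))"
proof -
  have "(\<lambda>n. \<alpha> n * z ^ n) sums (\<Sum>n. \<alpha> n * z ^ n)"
    using ps_summable[OF rad] by (rule summable_sums)
  then have "(\<lambda>n. z * (\<alpha> n * z ^ n)) sums (z * (\<Sum>n. \<alpha> n * z ^ n))"
    by (rule sums_mult)
  then have "(\<lambda>n. (\<lambda>n. (if n = 0 then 0 else \<alpha> (n - 1)) * z ^ n) (Suc n)) sums (z * (\<Sum>n. \<alpha> n * z ^ n) + 0)"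
    by (simp add: algebra_simps)
  then show ?thesis by (subst (asm) sums_Suc_iff) simp
qed

lemma r1_sums:
  fixes \<alpha> :: "nat \<Rightarrow> complex" and a b c :: real
  assumes rad: "conv_radius \<alpha> = \<infinity>"
  defines "\<beta> \<equiv> (\<lambda>n. - (1 / complex_of_real c) * (complex_of_real a * \<alpha> n
       + complex_of_real b * (if n = 0 then 0 else \<alpha> (n - 1)) + complex_of_real (c\<^sup>2 / 2) * diffs \<alpha> n))"
  shows "(\<lambda>n. \<beta> n * z ^ n) sums (- (1 / complex_of_real c) * (complex_of_real a * (\<Sum>n. \<alpha> n * z ^ n)
       + complex_of_real b * (z * (\<Sum>n. \<alpha> n * z ^ n)) + complex_of_real (c\<^sup>2 / 2) * (\<Sum>n. diffs \<alpha> n * z ^ n)))"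
proof -
  have s1: "(\<lambda>n. \<alpha> n * z ^ n) sums (\<Sum>n. \<alpha> n * z ^ n)"
    using ps_summable[OF rad] by (rule summable_sums)
  have s3: "(\<lambda>n. diffs \<alpha> n * z ^ n) sums (\<Sum>n. diffs \<alpha> n * z ^ n)"
    using ps_summable[OF ps_diffs_rad[OF rad]] by (rule summable_sums)
  have "(\<lambda>n. - (1 / complex_of_real c) * (complex_of_real a * (\<alpha> n * z ^ n)
       + complex_of_real b * ((if n = 0 then 0 else \<alpha> (n - 1)) * z ^ n) + complex_of_real (c\<^sup>2 / 2) * (diffs \<alpha> n * z ^ n)))
     sums (- (1 / complex_of_real c) * (complex_of_real a * (\<Sum>n. \<alpha> n * z ^ n)
       + complex_of_real b * (z * (\<Sum>n. \<alpha> n * z ^ n)) + complex_of_real (c\<^sup>2 / 2) * (\<Sum>n. diffs \<alpha> n * z ^ n)))"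
    by (intro sums_mult sums_add s1 s3 shift_sums[OF rad])
  then show ?thesis unfolding \<beta>_def by (simp add: algebra_simps)
qed

lemma normal_moments:
  assumes P: "prob_space M" and D: "distributed M lborel X (\<lambda>x. ennreal (normal_density 0 (sqrt d) x))"
    and d: "d > 0"
  shows "integrable M (\<lambda>\<omega>. X \<omega> ^ 2)" "integrable M (\<lambda>\<omega>. X \<omega> ^ 4)"
    "(\<integral>\<omega>. X \<omega> ^ 2 \<partial>M) = d" "(\<integral>\<omega>. X \<omega> ^ 4 \<partial>M) = 3 * d\<^sup>2"
proof -
  have s: "sqrt d > 0" by (rule real_sqrt_gt_zero[OF d])
  have i2: "integrable lborel (\<lambda>x. normal_density 0 (sqrt d) x * (x - 0) ^ (2*1))"
    by (rule integrable_normal_moment[OF s])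
  have i4: "integrable lborel (\<lambda>x. normal_density 0 (sqrt d) x * (x - 0) ^ (2*2))"
    by (rule integrable_normal_moment[OF s])
  show "integrable M (\<lambda>\<omega>. X \<omega> ^ 2)"
    using distributed_integrable[OF D, of "\<lambda>x. x^2"] i2 by simp
  show "integrable M (\<lambda>\<omega>. X \<omega> ^ 4)"
    using distributed_integrable[OF D, of "\<lambda>x. x^4"] i4 by simp
  have e2: "integral\<^sup>L lborel (\<lambda>x. normal_density 0 (sqrt d) x * (x - 0)^(2 * 1)) = fact (2 * 1) / ((2 / (sqrt d)\<^sup>2)^1 * fact 1)"
    using integral_normal_moment_even[OF s] .
  have e4: "integral\<^sup>L lborel (\<lambda>x. normal_density 0 (sqrt d) x * (x - 0)^(2 * 2)) = fact (2 * 2) / ((2 / (sqrt d)\<^sup>2)^2 * fact 2)"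
    using integral_normal_moment_even[OF s] .
  show "(\<integral>\<omega>. X \<omega> ^ 2 \<partial>M) = d"
    using distributed_integral[OF D, of "\<lambda>x. x^2"] e2 d by (simp add: fact_numeral)
  show "(\<integral>\<omega>. X \<omega> ^ 4 \<partial>M) = 3 * d\<^sup>2"
    using distributed_integral[OF D, of "\<lambda>x. x^4"] e4 d by (simp add: fact_numeral power2_eq_square field_simps)
qed

lemma qv_second_moment:
  assumes BM: "brownian_motion M W" and t0: "0 \<le> \<tau> 0" and inc: "\<forall>i<n. \<tau> i < \<tau> (Suc i)"
    and S: "S \<subseteq> {..<n}"
  shows "integrable M (\<lambda>\<omega>. (\<Sum>i\<in>S. (W (\<tau> (Suc i)) \<omega> - W (\<tau> i) \<omega>)^2 - (\<tau> (Suc i) - \<tau> i))^2)"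
    and "(\<integral>\<omega>. (\<Sum>i\<in>S. (W (\<tau> (Suc i)) \<omega> - W (\<tau> i) \<omega>)^2 - (\<tau> (Suc i) - \<tau> i))^2 \<partial>M)
         = (\<Sum>i\<in>S. 2 * (\<tau> (Suc i) - \<tau> i)^2)"
proof -
  define D where "D = (\<lambda>i \<omega>. W (\<tau> (Suc i)) \<omega> - W (\<tau> i) \<omega>)"
  define Y where "Y = (\<lambda>i \<omega>. (D i \<omega>)^2 - (\<tau> (Suc i) - \<tau> i))"
  have P: "prob_space M" using BM unfolding brownian_motion_def by auto
  interpret prob_space M by (rule P)
  have fin: "finite S" using S finite_subset by blast
  have pos: "\<And>i. i < n \<Longrightarrow> 0 \<le> \<tau> i"
  proof -
    fix i show "i < n \<Longrightarrow> 0 \<le> \<tau> i"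
    proof (induction i)
      case 0 then show ?case using t0 by simp
    next
      case (Suc i)
      then have "i < n" "0 \<le> \<tau> i" by auto
      then show ?case using inc by (meson less_imp_le order_trans)
    qed
  qed
  have distr: "distributed M lborel (D i) (\<lambda>x. ennreal (normal_density 0 (sqrt (\<tau> (Suc i) - \<tau> i)) x))"
    if "i < n" for i
    using BM pos[OF that] inc that unfolding brownian_motion_def D_def by auto
  have Dm: "D i \<in> borel_measurable M" if "i < n" for i
    using distributed_measurable[OF distr[OF that]] by simp
  have dpos: "\<tau> (Suc i) - \<tau> i > 0" if "i < n" for i using inc that by auto
  note mom = normal_moments[OF P distr dpos]
  have Yint: "integrable M (Y i)" if "i < n" for i
    unfolding Y_def using mom(1)[OF that that] by auto
  have Y0: "(\<integral>\<omega>. Y i \<omega> \<partial>M) = 0" if "i < n" for i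
    unfolding Y_def using mom(1,3)[OF that that] by (simp add: prob_space)
  have Y2eq: "(\<lambda>\<omega>. Y i \<omega> * Y i \<omega>) = (\<lambda>\<omega>. D i \<omega> ^ 4 - 2 * (\<tau> (Suc i) - \<tau> i) * (D i \<omega>)^2 + (\<tau> (Suc i) - \<tau> i)^2)" for i
    unfolding Y_def by (auto simp: fun_eq_iff power2_eq_square power4_eq_xxxx algebra_simps)
  have Y2int: "integrable M (\<lambda>\<omega>. Y i \<omega> * Y i \<omega>)" if "i < n" for i
    unfolding Y2eq using mom(1,2)[OF that that] by auto
  have Y2: "(\<integral>\<omega>. Y i \<omega> * Y i \<omega> \<partial>M) = 2 * (\<tau> (Suc i) - \<tau> i)^2" if "i < n" for i
    unfolding Y2eq using mom[OF that that] by (simp add: prob_space power2_eq_square)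
  have ind: "indep_vars (\<lambda>_. borel) D {..<n}"
  proof -
    have "0 \<le> \<tau> 0 \<and> (\<forall>i<n. \<tau> i < \<tau> (Suc i))" using t0 inc by auto
    then show ?thesis using BM unfolding brownian_motion_def D_def by blast
  qed
  have indij: "indep_var borel (Y i) borel (Y j)" if "i < n" "j < n" "i \<noteq> j" for i j
  proof -
    have "indep_var borel ((\<lambda>f. (f i)^2 - (\<tau> (Suc i) - \<tau> i)) \<circ> (\<lambda>\<omega>. restrict (\<lambda>i. D i \<omega>) {i}))
        borel ((\<lambda>f. (f j)^2 - (\<tau> (Suc j) - \<tau> j)) \<circ> (\<lambda>\<omega>. restrict (\<lambda>i. D i \<omega>) {j}))"
      using that by (intro indep_var_compose[OF indep_var_restrict[OF ind]]) auto
    moreover have "((\<lambda>f. (f i)^2 - (\<tau> (Suc i) - \<tau> i)) \<circ> (\<lambda>\<omega>. restrict (\<lambda>i. D i \<omega>) {i})) = Y i"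
      by (auto simp: Y_def)
    moreover have "((\<lambda>f. (f j)^2 - (\<tau> (Suc j) - \<tau> j)) \<circ> (\<lambda>\<omega>. restrict (\<lambda>i. D i \<omega>) {j})) = Y j"
      by (auto simp: Y_def)
    ultimately show ?thesis by simp
  qed
  have Yij: "integrable M (\<lambda>\<omega>. Y i \<omega> * Y j \<omega>) \<and> (\<integral>\<omega>. Y i \<omega> * Y j \<omega> \<partial>M) = (if i = j then 2 * (\<tau> (Suc i) - \<tau> i)^2 else 0)"
    if "i < n" "j < n" for i j
  proof (cases "i = j")
    case True then show ?thesis using Y2int Y2 that by simp
  next
    case False
    show ?thesis using indep_var_lebesgue_integral[OF indij[OF that False] Yint Yint]
        indep_var_integrable[OF indij[OF that False] Yint Yint] Y0 that False by simp
  qed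
  have sq: "(\<lambda>\<omega>. (\<Sum>i\<in>S. Y i \<omega>)^2) = (\<lambda>\<omega>. \<Sum>i\<in>S. \<Sum>j\<in>S. Y i \<omega> * Y j \<omega>)"
    by (simp add: power2_eq_square sum_product)
  have int: "integrable M (\<lambda>\<omega>. (\<Sum>i\<in>S. Y i \<omega>)^2)"
    unfolding sq using Yij S by (intro Bochner_Integration.integrable_sum) auto
  have "(\<integral>\<omega>. (\<Sum>i\<in>S. Y i \<omega>)^2 \<partial>M) = (\<Sum>i\<in>S. \<Sum>j\<in>S. (\<integral>\<omega>. Y i \<omega> * Y j \<omega> \<partial>M))"
    unfolding sq using Yij S by (subst Bochner_Integration.integral_sum; auto intro!: Bochner_Integration.integrable_sum sum.cong Bochner_Integration.integral_sum)
  also have "\<dots> = (\<Sum>i\<in>S. \<Sum>j\<in>S. (if i = j then 2 * (\<tau> (Suc i) - \<tau> i)^2 else 0))"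
    using Yij S by (intro sum.cong refl) (metis lessThan_iff subsetD)
  also have "\<dots> = (\<Sum>i\<in>S. 2 * (\<tau> (Suc i) - \<tau> i)^2)"
    using fin by (simp add: sum.delta)
  finally show "integrable M (\<lambda>\<omega>. (\<Sum>i\<in>S. (W (\<tau> (Suc i)) \<omega> - W (\<tau> i) \<omega>)^2 - (\<tau> (Suc i) - \<tau> i))^2)"
    and "(\<integral>\<omega>. (\<Sum>i\<in>S. (W (\<tau> (Suc i)) \<omega> - W (\<tau> i) \<omega>)^2 - (\<tau> (Suc i) - \<tau> i))^2 \<partial>M)
         = (\<Sum>i\<in>S. 2 * (\<tau> (Suc i) - \<tau> i)^2)"
    using int unfolding Y_def D_def by auto
qed


lemma qv_prob:
  assumes BM: "brownian_motion M W" and t0: "0 \<le> \<tau> 0" and inc: "\<forall>i<n. \<tau> i < \<tau> (Suc i)"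
    and S: "S \<subseteq> {..<n}" and eta: "\<eta> > 0" and mesh: "\<forall>i<n. \<tau> (Suc i) - \<tau> i \<le> \<delta>"
  shows "measure M {\<omega>\<in>space M. \<eta> \<le> \<bar>\<Sum>i\<in>S. (W (\<tau> (Suc i)) \<omega> - W (\<tau> i) \<omega>)^2 - (\<tau> (Suc i) - \<tau> i)\<bar>}
    \<le> 2 * \<delta> * (\<tau> n - \<tau> 0) / \<eta>\<^sup>2"
proof -
  have P: "prob_space M" using BM unfolding brownian_motion_def by auto
  interpret prob_space M by (rule P)
  have pos: "\<And>i. i \<le> n \<Longrightarrow> 0 \<le> \<tau> i"
  proof -
    fix i show "i \<le> n \<Longrightarrow> 0 \<le> \<tau> i"
    proof (induction i)
      case 0 then show ?case using t0 by simp
    next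
      case (Suc i)
      then have "i < n" "0 \<le> \<tau> i" by auto
      then show ?case using inc by (meson less_imp_le order_trans)
    qed
  qed
  have Wm: "\<And>s. s \<ge> 0 \<Longrightarrow> W s \<in> borel_measurable M" using BM unfolding brownian_motion_def by auto
  have meas: "(\<lambda>\<omega>. \<Sum>i\<in>S. (W (\<tau> (Suc i)) \<omega> - W (\<tau> i) \<omega>)^2 - (\<tau> (Suc i) - \<tau> i)) \<in> borel_measurable M"
    using S pos by (intro borel_measurable_sum borel_measurable_diff borel_measurable_power Wm) auto
  have "measure M {\<omega>\<in>space M. \<eta> \<le> \<bar>\<Sum>i\<in>S. (W (\<tau> (Suc i)) \<omega> - W (\<tau> i) \<omega>)^2 - (\<tau> (Suc i) - \<tau> i)\<bar>}
     \<le> (\<integral>\<omega>. (\<Sum>i\<in>S. (W (\<tau> (Suc i)) \<omega> - W (\<tau> i) \<omega>)^2 - (\<tau> (Suc i) - \<tau> i))^2 \<partial>M) / \<eta>\<^sup>2"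
    by (rule second_moment_method[OF meas qv_second_moment(1)[OF BM t0 inc S] eta])
  also have "\<dots> = (\<Sum>i\<in>S. 2 * (\<tau> (Suc i) - \<tau> i)^2) / \<eta>\<^sup>2"
    using qv_second_moment(2)[OF BM t0 inc S] by simp
  also have "\<dots> \<le> (\<Sum>i<n. 2 * \<delta> * (\<tau> (Suc i) - \<tau> i)) / \<eta>\<^sup>2"
  proof (intro divide_right_mono)
    have "(\<Sum>i\<in>S. 2 * (\<tau> (Suc i) - \<tau> i)^2) \<le> (\<Sum>i<n. 2 * (\<tau> (Suc i) - \<tau> i)^2)"
      using S inc by (intro sum_mono2) auto
    also have "\<dots> \<le> (\<Sum>i<n. 2 * \<delta> * (\<tau> (Suc i) - \<tau> i))"
      using inc mesh by (intro sum_mono) (auto simp: power2_eq_square intro!: mult_right_mono less_imp_le)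
    finally show "(\<Sum>i\<in>S. 2 * (\<tau> (Suc i) - \<tau> i)^2) \<le> (\<Sum>i<n. 2 * \<delta> * (\<tau> (Suc i) - \<tau> i))" .
  qed simp
  also have "(\<Sum>i<n. 2 * \<delta> * (\<tau> (Suc i) - \<tau> i)) = 2 * \<delta> * (\<tau> n - \<tau> 0)"
    by (simp add: sum_distrib_left[symmetric] sum_lessThan_telescope)
  finally show ?thesis .
qed

definition "QT T = \<rat> \<inter> {0..T::real}"

lemma countable_QT: "countable (QT T)"
  unfolding QT_def by (rule countable_Int1[OF countable_rat])

lemma rat_approx:
  assumes T: "T > 0" and v: "v \<in> {0..T}"
  shows "\<exists>r. (\<forall>n. r n \<in> QT T) \<and> r \<longlonglongrightarrow> v"
proof -
  have "\<forall>n. \<exists>q. q \<in> QT T \<and> \<bar>q - v\<bar> < 1 / real (Suc n)"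
  proof
    fix n
    have e: "1 / real (Suc n) > 0" by simp
    show "\<exists>q. q \<in> QT T \<and> \<bar>q - v\<bar> < 1 / real (Suc n)"
    proof (cases "v < T")
      case True
      obtain q where "q \<in> \<rat>" "v < q" "q < min (v + 1 / real (Suc n)) T"
        using Rats_dense_in_real[of v "min (v + 1 / real (Suc n)) T"] True e by auto
      then show ?thesis using v by (intro exI[of _ q]) (auto simp: QT_def)
    next
      case False
      then have vT: "v = T" using v by auto
      obtain q where "q \<in> \<rat>" "max (T - 1 / real (Suc n)) 0 < q" "q < T"
        using Rats_dense_in_real[of "max (T - 1 / real (Suc n)) 0" T] T e by auto
      then show ?thesis using vT by (intro exI[of _ q]) (auto simp: QT_def)
    qed
  qed
  then obtain r where r: "\<And>n. r n \<in> QT T" "\<And>n. \<bar>r n - v\<bar> < 1 / real (Suc n)" by metis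
  have "r \<longlonglongrightarrow> v"
  proof (rule LIMSEQ_I)
    fix e :: real assume "e > 0"
    then obtain N where N: "1 / real (Suc N) < e" using nat_approx_posE by blast
    show "\<exists>no. \<forall>n\<ge>no. norm (r n - v) < e"
    proof (intro exI allI impI)
      fix n assume "N \<le> n"
      then have "1 / real (Suc n) \<le> 1 / real (Suc N)" by (simp add: frac_le)
      then show "norm (r n - v) < e" using r(2)[of n] N by simp
    qed
  qed
  then show ?thesis using r by blast
qed

lemma bound_extend:
  fixes f :: "real \<Rightarrow> real"
  assumes T: "T > 0" and f: "continuous_on {0..T} f" and b: "\<forall>s\<in>QT T. \<bar>f s\<bar> \<le> K"
  shows "\<forall>s\<in>{0..T}. \<bar>f s\<bar> \<le> K"
proof
  fix v assume v: "v \<in> {0..T}"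
  obtain r where r: "\<And>n. r n \<in> QT T" "r \<longlonglongrightarrow> v" using rat_approx[OF T v] by blast
  have rT: "\<And>n. r n \<in> {0..T}" using r(1) by (auto simp: QT_def)
  have "(\<lambda>n. f (r n)) \<longlonglongrightarrow> f v"
    using continuous_on_tendsto_compose[OF f r(2) v] rT by simp
  then have "(\<lambda>n. \<bar>f (r n)\<bar>) \<longlonglongrightarrow> \<bar>f v\<bar>" by (rule tendsto_rabs)
  then show "\<bar>f v\<bar> \<le> K"
    by (rule LIMSEQ_le_const2) (use b r(1) in auto)
qed

lemma osc_extend:
  fixes f :: "real \<Rightarrow> real"
  assumes T: "T > 0" and f: "continuous_on {0..T} f"
    and b: "\<forall>s\<in>QT T. \<forall>s'\<in>QT T. \<bar>s - s'\<bar> \<le> \<rho> \<longrightarrow> \<bar>f s - f s'\<bar> \<le> \<eta>"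
    and v: "v \<in> {0..T}" and v': "v' \<in> {0..T}" and d: "\<bar>v - v'\<bar> < \<rho>"
  shows "\<bar>f v - f v'\<bar> \<le> \<eta>"
proof -
  obtain r where r: "\<And>n. r n \<in> QT T" "r \<longlonglongrightarrow> v" using rat_approx[OF T v] by blast
  obtain r' where r': "\<And>n. r' n \<in> QT T" "r' \<longlonglongrightarrow> v'" using rat_approx[OF T v'] by blast
  have rT: "\<And>n. r n \<in> {0..T}" "\<And>n. r' n \<in> {0..T}" using r(1) r'(1) by (auto simp: QT_def)
  have l1: "(\<lambda>n. f (r n) - f (r' n)) \<longlonglongrightarrow> f v - f v'"
    using continuous_on_tendsto_compose[OF f r(2) v] continuous_on_tendsto_compose[OF f r'(2) v'] rT
    by (intro tendsto_diff) auto
  have l2: "(\<lambda>n. \<bar>r n - r' n\<bar>) \<longlonglongrightarrow> \<bar>v - v'\<bar>"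
    by (intro tendsto_rabs tendsto_diff r(2) r'(2))
  have ev: "eventually (\<lambda>n. \<bar>r n - r' n\<bar> < \<rho>) sequentially"
    using order_tendstoD(2)[OF l2 d] .
  have "eventually (\<lambda>n. \<bar>f (r n) - f (r' n)\<bar> \<le> \<eta>) sequentially"
    using ev by eventually_elim (use b r(1) r'(1) in auto)
  then show ?thesis
    using tendsto_rabs[OF l1] by (intro tendsto_upperbound) auto
qed


lemma bound_event:
  fixes Y :: "real \<Rightarrow> 'a \<Rightarrow> real"
  assumes P: "prob_space M" and T: "T > 0" and meas: "\<forall>s\<in>{0..T}. Y s \<in> borel_measurable M"
    and cont: "\<forall>\<omega>\<in>space M. continuous_on {0..T} (\<lambda>s. Y s \<omega>)" and e: "\<epsilon> > 0"
  shows "\<exists>K. {\<omega>\<in>space M. \<exists>s\<in>QT T. K < \<bar>Y s \<omega>\<bar>} \<in> sets M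
      \<and> measure M {\<omega>\<in>space M. \<exists>s\<in>QT T. K < \<bar>Y s \<omega>\<bar>} \<le> \<epsilon>"
proof -
  interpret prob_space M by (rule P)
  define A where "A = (\<lambda>k::nat. {\<omega>\<in>space M. \<exists>s\<in>QT T. real k < \<bar>Y s \<omega>\<bar>})"
  have mK: "{\<omega>\<in>space M. \<exists>s\<in>QT T. K < \<bar>Y s \<omega>\<bar>} \<in> sets M" for K
  proof (rule sets.sets_Collect_countable_Ex'[OF _ countable_QT])
    fix s assume "s \<in> QT T"
    then have [measurable]: "Y s \<in> borel_measurable M" using meas by (auto simp: QT_def)
    show "{\<omega>\<in>space M. K < \<bar>Y s \<omega>\<bar>} \<in> sets M" by measurable
  qed
  have Am: "range A \<subseteq> sets M" unfolding A_def using mK by auto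
  have Ad: "decseq A" unfolding A_def decseq_def by force
  have Ai: "(\<Inter>k. A k) = {}"
  proof (rule ccontr)
    assume "(\<Inter>k. A k) \<noteq> {}"
    then obtain \<omega> where w: "\<And>k. \<omega> \<in> A k" by blast
    then have ws: "\<omega> \<in> space M" unfolding A_def by auto
    have "compact ((\<lambda>s. Y s \<omega>) ` {0..T})"
      using cont ws by (intro compact_continuous_image) auto
    then obtain B where B: "\<forall>y\<in>(\<lambda>s. Y s \<omega>) ` {0..T}. norm y \<le> B"
      using compact_imp_bounded bounded_iff by metis
    obtain k :: nat where k: "B < real k" using reals_Archimedean2 by blast
    from w[of k] obtain s where "s \<in> QT T" "real k < \<bar>Y s \<omega>\<bar>" unfolding A_def by auto
    moreover then have "\<bar>Y s \<omega>\<bar> \<le> B" using B by (auto simp: QT_def)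
    ultimately show False using k by simp
  qed
  have "(\<lambda>k. measure M (A k)) \<longlonglongrightarrow> measure M (\<Inter>k. A k)"
    by (rule finite_Lim_measure_decseq[OF Am Ad])
  then have "(\<lambda>k. measure M (A k)) \<longlonglongrightarrow> 0" using Ai by simp
  then have "eventually (\<lambda>k. measure M (A k) < \<epsilon>) sequentially"
    using e by (rule order_tendstoD(2))
  then obtain k where "measure M (A k) < \<epsilon>" by (auto simp: eventually_sequentially)
  then show ?thesis using mK unfolding A_def by (intro exI[of _ "real k"]) auto
qed

lemma osc_event:
  fixes Y :: "real \<Rightarrow> 'a \<Rightarrow> real"
  assumes P: "prob_space M" and T: "T > 0" and meas: "\<forall>s\<in>{0..T}. Y s \<in> borel_measurable M"
    and cont: "\<forall>\<omega>\<in>space M. continuous_on {0..T} (\<lambda>s. Y s \<omega>)" and e: "\<epsilon> > 0" and eta: "\<eta> > 0"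
  shows "\<exists>\<rho>>0. {\<omega>\<in>space M. \<exists>s\<in>QT T. \<exists>s'\<in>QT T. \<bar>s - s'\<bar> \<le> \<rho> \<and> \<eta> < \<bar>Y s \<omega> - Y s' \<omega>\<bar>} \<in> sets M
      \<and> measure M {\<omega>\<in>space M. \<exists>s\<in>QT T. \<exists>s'\<in>QT T. \<bar>s - s'\<bar> \<le> \<rho> \<and> \<eta> < \<bar>Y s \<omega> - Y s' \<omega>\<bar>} \<le> \<epsilon>"
proof -
  interpret prob_space M by (rule P)
  define A where "A = (\<lambda>k::nat. {\<omega>\<in>space M. \<exists>s\<in>QT T. \<exists>s'\<in>QT T. \<bar>s - s'\<bar> \<le> 1 / real (Suc k) \<and> \<eta> < \<bar>Y s \<omega> - Y s' \<omega>\<bar>})"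
  have mK: "{\<omega>\<in>space M. \<exists>s\<in>QT T. \<exists>s'\<in>QT T. \<bar>s - s'\<bar> \<le> \<rho> \<and> \<eta> < \<bar>Y s \<omega> - Y s' \<omega>\<bar>} \<in> sets M" for \<rho>
  proof (rule sets.sets_Collect_countable_Ex'[OF _ countable_QT])
    fix s assume "s \<in> QT T"
    then have [measurable]: "Y s \<in> borel_measurable M" using meas by (auto simp: QT_def)
    show "{\<omega>\<in>space M. \<exists>s'\<in>QT T. \<bar>s - s'\<bar> \<le> \<rho> \<and> \<eta> < \<bar>Y s \<omega> - Y s' \<omega>\<bar>} \<in> sets M"
    proof (rule sets.sets_Collect_countable_Ex'[OF _ countable_QT])
      fix s' assume "s' \<in> QT T"
      then have [measurable]: "Y s' \<in> borel_measurable M" using meas by (auto simp: QT_def)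
      show "{\<omega>\<in>space M. \<bar>s - s'\<bar> \<le> \<rho> \<and> \<eta> < \<bar>Y s \<omega> - Y s' \<omega>\<bar>} \<in> sets M" by measurable
    qed
  qed
  have Am: "range A \<subseteq> sets M" unfolding A_def using mK by auto
  have Ad: "decseq A"
  proof (rule decseq_SucI)
    fix k
    have "1 / real (Suc (Suc k)) \<le> 1 / real (Suc k)" by (simp add: frac_le)
    then show "A (Suc k) \<subseteq> A k" unfolding A_def by force
  qed
  have Ai: "(\<Inter>k. A k) = {}"
  proof (rule ccontr)
    assume "(\<Inter>k. A k) \<noteq> {}"
    then obtain \<omega> where w: "\<And>k. \<omega> \<in> A k" by blast
    then have ws: "\<omega> \<in> space M" unfolding A_def by auto
    have "uniformly_continuous_on {0..T} (\<lambda>s. Y s \<omega>)"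
      using cont ws by (intro compact_uniformly_continuous) auto
    then obtain d where d: "d > 0" "\<forall>x\<in>{0..T}. \<forall>x'\<in>{0..T}. dist x' x < d \<longrightarrow> dist (Y x' \<omega>) (Y x \<omega>) < \<eta>"
      unfolding uniformly_continuous_on_def using eta by metis
    obtain k :: nat where k: "1 / real (Suc k) < d" using nat_approx_posE d(1) by blast
    from w[of k] obtain s s' where "s \<in> QT T" "s' \<in> QT T" "\<bar>s - s'\<bar> \<le> 1 / real (Suc k)" "\<eta> < \<bar>Y s \<omega> - Y s' \<omega>\<bar>"
      unfolding A_def by auto
    moreover then have "dist (Y s \<omega>) (Y s' \<omega>) < \<eta>" using d(2) k by (auto simp: QT_def dist_real_def)
    ultimately show False by (simp add: dist_real_def)
  qed
  have "(\<lambda>k. measure M (A k)) \<longlonglongrightarrow> measure M (\<Inter>k. A k)"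
    by (rule finite_Lim_measure_decseq[OF Am Ad])
  then have "(\<lambda>k. measure M (A k)) \<longlonglongrightarrow> 0" using Ai by simp
  then have "eventually (\<lambda>k. measure M (A k) < \<epsilon>) sequentially"
    using e by (rule order_tendstoD(2))
  then obtain k where "measure M (A k) < \<epsilon>" by (auto simp: eventually_sequentially)
  then show ?thesis using mK unfolding A_def by (intro exI[of _ "1 / real (Suc k)"]) auto
qed

lemma vd_bound:
  fixes f :: "real \<Rightarrow> 'b::real_normed_vector"
  assumes S: "convex S" and d: "\<And>z. z \<in> S \<Longrightarrow> (f has_vector_derivative f' z) (at z within S)"
    and B: "\<And>z. z \<in> S \<Longrightarrow> norm (f' z) \<le> B" and x: "x \<in> S" and y: "y \<in> S"
  shows "norm (f x - f y) \<le> B * \<bar>x - y\<bar>"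
proof -
  have "norm (f x - f y) \<le> B * norm (x - y)"
  proof (rule differentiable_bound[OF S _ _ x y])
    fix z assume "z \<in> S"
    show "(f has_derivative (\<lambda>h. h *\<^sub>R f' z)) (at z within S)"
      using d[OF \<open>z \<in> S\<close>] by (simp add: has_vector_derivative_def)
    have "onorm (\<lambda>h::real. h *\<^sub>R f' z) = onorm (\<lambda>h::real. h) * norm (f' z)"
      by (rule onorm_scaleR_left) (rule bounded_linear_ident)
    also have "\<dots> = norm (f' z)" by (simp add: onorm_id)
    finally show "onorm (\<lambda>h. h *\<^sub>R f' z) \<le> B" using B[OF \<open>z \<in> S\<close>] by simp
  qed
  then show ?thesis by simp
qed

lemma taylor2:
  fixes r2 q q' :: "real \<Rightarrow> complex"
  assumes d1: "\<And>y. (r2 has_vector_derivative q y) (at y)"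
    and d2: "\<And>y. (q has_vector_derivative q' y) (at y)"
    and B: "\<And>z. z \<in> {min y0 y1..max y0 y1} \<Longrightarrow> norm (q' z - q' y0) \<le> B"
  shows "norm (r2 y1 - r2 y0 - of_real (y1 - y0) * q y0 - of_real ((y1 - y0)^2 / 2) * q' y0) \<le> B * (y1 - y0)^2"
proof -
  define S where "S = {min y0 y1..max y0 y1}"
  have S: "convex S" unfolding S_def by (rule convex_real_interval)
  have y0: "y0 \<in> S" and y1: "y1 \<in> S" unfolding S_def by auto
  define \<psi> where "\<psi> = (\<lambda>z. q z - q y0 - of_real (z - y0) * q' y0)"
  have d\<psi>: "(\<psi> has_vector_derivative (q' z - q' y0)) (at z within S)" for z
  proof -
    have r: "((\<lambda>z. z - y0) has_real_derivative 1) (at z within S)"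
      using DERIV_diff[OF DERIV_ident DERIV_const] by simp
    show ?thesis unfolding \<psi>_def
      by (rule has_vector_derivative_eq_rhs[OF has_vector_derivative_diff[OF
          has_vector_derivative_diff[OF has_vector_derivative_at_within[OF d2] has_vector_derivative_const]
          has_vector_derivative_mult_left[OF has_vector_derivative_of_real[OF r]]]]) simp
  qed
  have b\<psi>: "norm (\<psi> z) \<le> B * \<bar>z - y0\<bar>" if "z \<in> S" for z
  proof -
    have "norm (\<psi> z - \<psi> y0) \<le> B * \<bar>z - y0\<bar>"
      by (rule vd_bound[OF S d\<psi> _ that y0]) (use B S_def in auto)
    then show ?thesis by (simp add: \<psi>_def)
  qed
  define \<phi> where "\<phi> = (\<lambda>z. r2 z - r2 y0 - of_real (z - y0) * q y0 - of_real ((z - y0)^2 / 2) * q' y0)"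
  have d\<phi>: "(\<phi> has_vector_derivative \<psi> z) (at z within S)" for z
  proof -
    have r: "((\<lambda>z. z - y0) has_real_derivative 1) (at z within S)"
      using DERIV_diff[OF DERIV_ident DERIV_const] by simp
    have r2': "((\<lambda>z. (z - y0)^2 / 2) has_real_derivative (z - y0)) (at z within S)"
      by (auto intro!: derivative_eq_intros)
    show ?thesis unfolding \<phi>_def \<psi>_def
      by (rule has_vector_derivative_eq_rhs[OF has_vector_derivative_diff[OF has_vector_derivative_diff[OF
          has_vector_derivative_diff[OF has_vector_derivative_at_within[OF d1] has_vector_derivative_const]
          has_vector_derivative_mult_left[OF has_vector_derivative_of_real[OF r]]]
          has_vector_derivative_mult_left[OF has_vector_derivative_of_real[OF r2']]]]) simp
  qed
  have "norm (\<phi> y1 - \<phi> y0) \<le> (B * \<bar>y1 - y0\<bar>) * \<bar>y1 - y0\<bar>"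
  proof (rule vd_bound[OF S d\<phi> _ y1 y0])
    fix z assume z: "z \<in> S"
    have "\<bar>z - y0\<bar> \<le> \<bar>y1 - y0\<bar>" using z unfolding S_def by auto
    moreover have "B \<ge> 0" using B[of y0] by (auto intro: order_trans[OF norm_ge_zero])
    ultimately show "norm (\<psi> z) \<le> B * \<bar>y1 - y0\<bar>"
      using b\<psi>[OF z] by (meson mult_left_mono order_trans)
  qed
  then show ?thesis by (simp add: \<phi>_def power2_eq_square mult.assoc)
qed

lemma int_bound:
  fixes f :: "real \<Rightarrow> 'a::banach"
  assumes "continuous_on {s..u} f" "s \<le> u" "\<And>v. v \<in> {s..u} \<Longrightarrow> norm (f v) \<le> B"
  shows "norm (integral {s..u} f) \<le> B * (u - s)"
proof -
  have B: "0 \<le> B" using assms(2) assms(3)[of s] by (auto intro: order_trans[OF norm_ge_zero])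
  have "(f has_integral integral {s..u} f) (cbox s u)"
    using integrable_integral[OF integrable_continuous_interval[OF assms(1)]] by simp
  from has_integral_bound[OF B this] assms(3) show ?thesis using assms(2) by simp
qed

lemma norm5: "norm (x1 + x2 + x3 - x4 - x5) \<le> norm x1 + norm x2 + norm x3 + norm x4 + norm x5"
  for x1 :: "'a::real_normed_vector"
proof -
  have "norm (x1 + x2 + x3 - x4 - x5) \<le> norm (x1 + x2 + x3 - x4) + norm x5" by (rule norm_triangle_ineq4)
  moreover have "norm (x1 + x2 + x3 - x4) \<le> norm (x1 + x2 + x3) + norm x4" by (rule norm_triangle_ineq4)
  moreover have "norm (x1 + x2 + x3) \<le> norm (x1 + x2) + norm x3" by (rule norm_triangle_ineq)
  moreover have "norm (x1 + x2) \<le> norm x1 + norm x2" by (rule norm_triangle_ineq)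
  ultimately show ?thesis by linarith
qed

locale itoset =
  fixes a b c T :: real and h h' r2 q q' r1 :: "real \<Rightarrow> complex"
  assumes c: "c \<noteq> 0" and T: "T > 0"
    and d1: "\<And>y. (r2 has_vector_derivative q y) (at y)"
    and d2: "\<And>y. (q has_vector_derivative q' y) (at y)"
    and q'c: "continuous_on UNIV q'"
    and r1e: "\<And>y. r1 y = - (of_real (a + b * y) * q y + of_real (c\<^sup>2 / 2) * q' y)"
    and hd: "\<And>s. s \<in> {0..T} \<Longrightarrow> (h has_vector_derivative h' s) (at s within {0..T})"
    and h'c: "continuous_on {0..T} h'"
begin

lemma hc: "continuous_on {0..T} h"
  by (rule continuous_on_vector_derivative[OF hd])

lemma r2c: "continuous_on S r2"
  by (rule continuous_on_vector_derivative[of _ _ q]) (rule has_vector_derivative_at_within[OF d1])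

lemma qc: "continuous_on S q"
  by (rule continuous_on_vector_derivative[of _ _ q']) (rule has_vector_derivative_at_within[OF d2])

lemma q'c': "continuous_on S q'"
  using q'c continuous_on_subset by blast

definition eloc where
  "eloc x w s u = h s * (of_real c * q (x s)) * of_real (w u - w s) - (h u * r2 (x u) - h s * r2 (x s))
     + integral {s..u} (\<lambda>v. h' v * r2 (x v) - h v * r1 (x v))
     + of_real (c\<^sup>2 / 2) * (h s * q' (x s)) * of_real ((w u - w s)\<^sup>2 - (u - s))"

lemma cint: "continuous_on {s..u} f \<Longrightarrow> (f has_integral integral {s..u} f) {s..u}"
  for f :: "real \<Rightarrow> complex"
  by (intro integrable_integral integrable_continuous_interval)

lemma eloc_id:
  fixes x w :: "real \<Rightarrow> real"
  assumes xc: "continuous_on {0..T} x" and su: "0 \<le> s" "s \<le> u" "u \<le> T"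
    and incr: "x u - x s = integral {s..u} (\<lambda>v. a + b * x v) + c * (w u - w s)"
  shows "eloc x w s u =
      integral {s..u} (\<lambda>v. h' v * (r2 (x v) - r2 (x u)))
    + integral {s..u} (\<lambda>v. (h v * q (x v) - h s * q (x s)) * of_real (a + b * x v))
    + of_real (c\<^sup>2 / 2) * integral {s..u} (\<lambda>v. h v * q' (x v) - h s * q' (x s))
    - (h s * q' (x s)) * of_real (((integral {s..u} (\<lambda>v. a + b * x v))\<^sup>2 + 2 * c * (integral {s..u} (\<lambda>v. a + b * x v)) * (w u - w s)) / 2)
    - h s * (r2 (x u) - r2 (x s) - of_real (x u - x s) * q (x s) - of_real ((x u - x s)\<^sup>2 / 2) * q' (x s))"
proof -
  have sub: "{s..u} \<subseteq> {0..T}" using su by auto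
  have xc': "continuous_on {s..u} x" using continuous_on_subset[OF xc sub] .
  have hc': "continuous_on {s..u} h" using continuous_on_subset[OF hc sub] .
  have h'c': "continuous_on {s..u} h'" using continuous_on_subset[OF h'c sub] .
  have r2x: "continuous_on {s..u} (\<lambda>v. r2 (x v))" by (rule continuous_on_compose2[OF r2c xc']) auto
  have qx: "continuous_on {s..u} (\<lambda>v. q (x v))" by (rule continuous_on_compose2[OF qc xc']) auto
  have q'x: "continuous_on {s..u} (\<lambda>v. q' (x v))" by (rule continuous_on_compose2[OF q'c' xc']) auto
  have lin: "continuous_on {s..u} (\<lambda>v. a + b * x v)" by (intro continuous_intros xc')
  have linc: "continuous_on {s..u} (\<lambda>v. complex_of_real (a + b * x v))" by (intro continuous_intros xc')
  define A where "A = integral {s..u} (\<lambda>v. a + b * x v)"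
  define D where "D = w u - w s"
  define J1 where "J1 = integral {s..u} (\<lambda>v. h' v * r2 (x v))"
  define J2 where "J2 = integral {s..u} (\<lambda>v. h v * q (x v) * of_real (a + b * x v))"
  define J3 where "J3 = integral {s..u} (\<lambda>v. h v * q' (x v))"
  have iA: "((\<lambda>v. a + b * x v) has_integral A) {s..u}" unfolding A_def
    by (intro integrable_integral integrable_continuous_interval lin)
  have iAc: "((\<lambda>v. complex_of_real (a + b * x v)) has_integral of_real A) {s..u}"
    by (rule has_integral_of_real[OF iA])
  have i1: "((\<lambda>v. h' v * r2 (x v)) has_integral J1) {s..u}" unfolding J1_def
    by (intro cint continuous_intros h'c' r2x)
  have i2: "((\<lambda>v. h v * q (x v) * of_real (a + b * x v)) has_integral J2) {s..u}" unfolding J2_def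
    by (intro cint continuous_intros hc' qx linc)
  have i3: "((\<lambda>v. h v * q' (x v)) has_integral J3) {s..u}" unfolding J3_def
    by (intro cint continuous_intros hc' q'x)
  have ih: "(h' has_integral (h u - h s)) {s..u}"
    by (rule fundamental_theorem_of_calculus[OF su(2)])
       (rule has_vector_derivative_within_subset[OF hd sub]; use sub in auto)
  have ic: "((\<lambda>v. k) has_integral (of_real (u - s) * k)) {s..u}" for k :: complex
    using has_integral_const_real[of k s u] su by (simp add: scaleR_conv_of_real)
  have m: "integral {s..u} (\<lambda>v. h' v * r2 (x v) - h v * r1 (x v)) = J1 + J2 + of_real (c\<^sup>2 / 2) * J3"
  proof (rule integral_unique)
    have "((\<lambda>v. h' v * r2 (x v) + h v * q (x v) * of_real (a + b * x v) + of_real (c\<^sup>2 / 2) * (h v * q' (x v)))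
        has_integral (J1 + J2 + of_real (c\<^sup>2 / 2) * J3)) {s..u}"
      by (intro has_integral_add i1 i2 has_integral_mult_right i3)
    then show "((\<lambda>v. h' v * r2 (x v) - h v * r1 (x v)) has_integral (J1 + J2 + of_real (c\<^sup>2 / 2) * J3)) {s..u}"
      by (simp add: r1e algebra_simps)
  qed
  have e1: "integral {s..u} (\<lambda>v. h' v * (r2 (x v) - r2 (x u))) = J1 - (h u - h s) * r2 (x u)"
  proof (rule integral_unique)
    show "((\<lambda>v. h' v * (r2 (x v) - r2 (x u))) has_integral (J1 - (h u - h s) * r2 (x u))) {s..u}"
      using has_integral_diff[OF i1 has_integral_mult_left[OF ih, of "r2 (x u)"]]
      by (simp add: algebra_simps)
  qed
  have e2: "integral {s..u} (\<lambda>v. (h v * q (x v) - h s * q (x s)) * of_real (a + b * x v)) = J2 - h s * q (x s) * of_real A"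
  proof (rule integral_unique)
    show "((\<lambda>v. (h v * q (x v) - h s * q (x s)) * of_real (a + b * x v)) has_integral (J2 - h s * q (x s) * of_real A)) {s..u}"
      using has_integral_diff[OF i2 has_integral_mult_right[OF iAc, of "h s * q (x s)"]]
      by (simp add: algebra_simps)
  qed
  have e3: "integral {s..u} (\<lambda>v. h v * q' (x v) - h s * q' (x s)) = J3 - of_real (u - s) * (h s * q' (x s))"
  proof (rule integral_unique)
    show "((\<lambda>v. h v * q' (x v) - h s * q' (x s)) has_integral (J3 - of_real (u - s) * (h s * q' (x s)))) {s..u}"
      by (rule has_integral_diff[OF i3 ic])
  qed
  have xd: "x u = x s + A + c * D" using incr unfolding A_def D_def by simp
  show ?thesis
    unfolding eloc_def m e1 e2 e3 A_def[symmetric] D_def[symmetric]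
    by (simp add: xd algebra_simps power2_eq_square add_divide_distrib diff_divide_distrib)
qed


lemma eloc_bound:
  fixes x w :: "real \<Rightarrow> real"
  assumes xc: "continuous_on {0..T} x" and su: "0 \<le> s" "s \<le> u" "u \<le> T"
    and incr: "x u - x s = integral {s..u} (\<lambda>v. a + b * x v) + c * (w u - w s)"
    and e1: "u - s \<le> \<epsilon>" "u - s \<le> 1" "\<bar>w u - w s\<bar> \<le> \<epsilon>"
    and bnd: "\<And>v. v \<in> {s..u} \<Longrightarrow> cmod (h' v) \<le> Mh' \<and> cmod (h v) \<le> Mh \<and> cmod (q (x v)) \<le> Mq
                 \<and> cmod (q' (x v)) \<le> Mq' \<and> \<bar>a + b * x v\<bar> \<le> L1"
    and md: "\<And>v. v \<in> {s..u} \<Longrightarrow> cmod (r2 (x v) - r2 (x u)) \<le> \<epsilon> \<and> cmod (h v - h s) \<le> \<epsilon>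
                 \<and> cmod (q (x v) - q (x s)) \<le> \<epsilon> \<and> cmod (q' (x v) - q' (x s)) \<le> \<epsilon>"
    and tay: "\<And>z. z \<in> {min (x s) (x u)..max (x s) (x u)} \<Longrightarrow> cmod (q' z - q' (x s)) \<le> \<epsilon>"
  shows "cmod (eloc x w s u) \<le> \<epsilon> * (Mh' + (Mq + Mh) * L1 + c\<^sup>2 / 2 * (Mq' + Mh) + Mh * Mq' * (L1\<^sup>2 / 2 + \<bar>c\<bar> * L1)
       + 2 * Mh * L1\<^sup>2 + 2 * Mh * c\<^sup>2) * ((u - s) + (w u - w s)\<^sup>2)"
proof -
  have sub: "{s..u} \<subseteq> {0..T}" using su by auto
  have sin: "s \<in> {s..u}" using su by auto
  have xc': "continuous_on {s..u} x" using continuous_on_subset[OF xc sub] .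
  have hc': "continuous_on {s..u} h" using continuous_on_subset[OF hc sub] .
  have h'c': "continuous_on {s..u} h'" using continuous_on_subset[OF h'c sub] .
  have r2x: "continuous_on {s..u} (\<lambda>v. r2 (x v))" by (rule continuous_on_compose2[OF r2c xc']) auto
  have qx: "continuous_on {s..u} (\<lambda>v. q (x v))" by (rule continuous_on_compose2[OF qc xc']) auto
  have q'x: "continuous_on {s..u} (\<lambda>v. q' (x v))" by (rule continuous_on_compose2[OF q'c' xc']) auto
  have lin: "continuous_on {s..u} (\<lambda>v. a + b * x v)" by (intro continuous_intros xc')
  have linc: "continuous_on {s..u} (\<lambda>v. complex_of_real (a + b * x v))" by (intro continuous_intros xc')
  have \<epsilon>0: "\<epsilon> \<ge> 0" using e1 by linarith
  have Mh'0: "Mh' \<ge> 0" and Mh0: "Mh \<ge> 0" and Mq0: "Mq \<ge> 0" and Mq'0: "Mq' \<ge> 0" and L10: "L1 \<ge> 0"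
    using bnd[OF sin] by (auto intro: order_trans[OF norm_ge_zero] order_trans[OF abs_ge_zero])
  define \<Delta> where "\<Delta> = u - s"
  define D where "D = w u - w s"
  define A where "A = integral {s..u} (\<lambda>v. a + b * x v)"
  have \<Delta>0: "\<Delta> \<ge> 0" using su unfolding \<Delta>_def by simp
  have Ab: "\<bar>A\<bar> \<le> L1 * \<Delta>"
  proof -
    have "norm (integral {s..u} (\<lambda>v. a + b * x v)) \<le> L1 * (u - s)"
      by (rule int_bound[OF lin su(2)]) (use bnd in auto)
    then show ?thesis unfolding A_def \<Delta>_def by simp
  qed
  have A2: "A\<^sup>2 \<le> L1\<^sup>2 * \<Delta> * \<Delta>"
  proof -
    have "A\<^sup>2 \<le> (L1 * \<Delta>)\<^sup>2" using Ab by (metis abs_ge_zero power2_abs power_mono)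
    then show ?thesis by (simp add: power2_eq_square algebra_simps)
  qed
  have A2a: "A\<^sup>2 \<le> L1\<^sup>2 * \<Delta> * \<epsilon>"
    using A2 mult_left_mono[of \<Delta> \<epsilon> "L1\<^sup>2 * \<Delta>"] e1 \<Delta>0 unfolding \<Delta>_def by (simp add: mult_nonneg_nonneg)
  have A2b: "A\<^sup>2 \<le> L1\<^sup>2 * \<Delta>"
    using A2 mult_left_mono[of \<Delta> 1 "L1\<^sup>2 * \<Delta>"] e1 \<Delta>0 unfolding \<Delta>_def by (simp add: mult_nonneg_nonneg)
  have Db: "\<bar>D\<bar> \<le> \<epsilon>" using e1 unfolding D_def by simp
  have b1: "cmod (integral {s..u} (\<lambda>v. h' v * (r2 (x v) - r2 (x u)))) \<le> (Mh' * \<epsilon>) * \<Delta>"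
    unfolding \<Delta>_def
  proof (rule int_bound)
    show "continuous_on {s..u} (\<lambda>v. h' v * (r2 (x v) - r2 (x u)))" by (intro continuous_intros h'c' r2x)
    fix v assume v: "v \<in> {s..u}"
    show "cmod (h' v * (r2 (x v) - r2 (x u))) \<le> Mh' * \<epsilon>"
      unfolding norm_mult using bnd[OF v] md[OF v] Mh'0 \<epsilon>0 by (intro mult_mono) auto
  qed (use su in auto)
  have b2: "cmod (integral {s..u} (\<lambda>v. (h v * q (x v) - h s * q (x s)) * of_real (a + b * x v))) \<le> ((\<epsilon> * Mq + Mh * \<epsilon>) * L1) * \<Delta>"
    unfolding \<Delta>_def
  proof (rule int_bound)
    show "continuous_on {s..u} (\<lambda>v. (h v * q (x v) - h s * q (x s)) * of_real (a + b * x v))"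
      by (intro continuous_intros hc' qx linc)
    fix v assume v: "v \<in> {s..u}"
    have "cmod (h v * q (x v) - h s * q (x s)) = cmod ((h v - h s) * q (x v) + h s * (q (x v) - q (x s)))"
      by (simp add: algebra_simps)
    also have "\<dots> \<le> cmod ((h v - h s) * q (x v)) + cmod (h s * (q (x v) - q (x s)))" by (rule norm_triangle_ineq)
    also have "\<dots> \<le> \<epsilon> * Mq + Mh * \<epsilon>"
      unfolding norm_mult using bnd[OF v] md[OF v] bnd[OF sin] \<epsilon>0 Mh0 Mq0 Mq'0 by (intro add_mono mult_mono) auto
    finally have "cmod (h v * q (x v) - h s * q (x s)) \<le> \<epsilon> * Mq + Mh * \<epsilon>" .
    then show "cmod ((h v * q (x v) - h s * q (x s)) * of_real (a + b * x v)) \<le> (\<epsilon> * Mq + Mh * \<epsilon>) * L1"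
      unfolding norm_mult norm_of_real using bnd[OF v] \<epsilon>0 Mq0 Mh0 L10 by (intro mult_mono) auto
  qed (use su in auto)
  have b3: "cmod (of_real (c\<^sup>2 / 2) * integral {s..u} (\<lambda>v. h v * q' (x v) - h s * q' (x s))) \<le> c\<^sup>2 / 2 * ((\<epsilon> * Mq' + Mh * \<epsilon>) * \<Delta>)"
  proof -
    have "cmod (integral {s..u} (\<lambda>v. h v * q' (x v) - h s * q' (x s))) \<le> (\<epsilon> * Mq' + Mh * \<epsilon>) * \<Delta>"
      unfolding \<Delta>_def
    proof (rule int_bound)
      show "continuous_on {s..u} (\<lambda>v. h v * q' (x v) - h s * q' (x s))"
        by (intro continuous_intros hc' q'x)
      fix v assume v: "v \<in> {s..u}"
      have "cmod (h v * q' (x v) - h s * q' (x s)) = cmod ((h v - h s) * q' (x v) + h s * (q' (x v) - q' (x s)))"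
        by (simp add: algebra_simps)
      also have "\<dots> \<le> cmod ((h v - h s) * q' (x v)) + cmod (h s * (q' (x v) - q' (x s)))" by (rule norm_triangle_ineq)
      also have "\<dots> \<le> \<epsilon> * Mq' + Mh * \<epsilon>"
        unfolding norm_mult using bnd[OF v] md[OF v] bnd[OF sin] \<epsilon>0 Mh0 Mq0 Mq'0 by (intro add_mono mult_mono) auto
      finally show "cmod (h v * q' (x v) - h s * q' (x s)) \<le> \<epsilon> * Mq' + Mh * \<epsilon>" .
    qed (use su in auto)
    then show ?thesis unfolding norm_mult norm_of_real by (simp add: mult_left_mono)
  qed
  have b4: "cmod ((h s * q' (x s)) * of_real ((A\<^sup>2 + 2 * c * A * D) / 2)) \<le> Mh * Mq' * ((L1\<^sup>2 * \<Delta> * \<epsilon> + 2 * \<bar>c\<bar> * (L1 * \<Delta>) * \<epsilon>) / 2)"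
  proof -
    have "\<bar>(A\<^sup>2 + 2 * c * A * D) / 2\<bar> \<le> (A\<^sup>2 + 2 * \<bar>c\<bar> * \<bar>A\<bar> * \<bar>D\<bar>) / 2"
      by (auto simp: abs_mult intro!: order_trans[OF abs_triangle_ineq])
    also have "\<dots> \<le> (L1\<^sup>2 * \<Delta> * \<epsilon> + 2 * \<bar>c\<bar> * (L1 * \<Delta>) * \<epsilon>) / 2"
      using A2a Ab Db by (intro divide_right_mono add_mono mult_mono) auto
    finally have *: "\<bar>(A\<^sup>2 + 2 * c * A * D) / 2\<bar> \<le> (L1\<^sup>2 * \<Delta> * \<epsilon> + 2 * \<bar>c\<bar> * (L1 * \<Delta>) * \<epsilon>) / 2" .
    show ?thesis unfolding norm_mult norm_of_real using bnd[OF sin] * Mh0 Mq'0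
      by (intro mult_mono) auto
  qed
  have b5: "cmod (h s * (r2 (x u) - r2 (x s) - of_real (x u - x s) * q (x s) - of_real ((x u - x s)\<^sup>2 / 2) * q' (x s)))
     \<le> Mh * (\<epsilon> * (2 * (L1\<^sup>2 * \<Delta>) + 2 * c\<^sup>2 * D\<^sup>2))"
  proof -
    have t: "cmod (r2 (x u) - r2 (x s) - of_real (x u - x s) * q (x s) - of_real ((x u - x s)\<^sup>2 / 2) * q' (x s)) \<le> \<epsilon> * (x u - x s)\<^sup>2"
      by (rule taylor2[OF d1 d2 tay])
    have "(x u - x s)\<^sup>2 = (A + c * D)\<^sup>2" using incr unfolding A_def D_def by simp
    also have "\<dots> \<le> 2 * A\<^sup>2 + 2 * c\<^sup>2 * D\<^sup>2"
    proof -
      have "(A + c * D)\<^sup>2 + (A - c * D)\<^sup>2 = 2 * A\<^sup>2 + 2 * c\<^sup>2 * D\<^sup>2" by (simp add: power2_eq_square algebra_simps)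
      then show ?thesis using zero_le_power2[of "A - c * D"] by linarith
    qed
    also have "\<dots> \<le> 2 * (L1\<^sup>2 * \<Delta>) + 2 * c\<^sup>2 * D\<^sup>2" using A2b by simp
    finally have "(x u - x s)\<^sup>2 \<le> 2 * (L1\<^sup>2 * \<Delta>) + 2 * c\<^sup>2 * D\<^sup>2" .
    then have "\<epsilon> * (x u - x s)\<^sup>2 \<le> \<epsilon> * (2 * (L1\<^sup>2 * \<Delta>) + 2 * c\<^sup>2 * D\<^sup>2)" using \<epsilon>0 by (rule mult_left_mono)
    with t have "cmod (r2 (x u) - r2 (x s) - of_real (x u - x s) * q (x s) - of_real ((x u - x s)\<^sup>2 / 2) * q' (x s)) \<le> \<epsilon> * (2 * (L1\<^sup>2 * \<Delta>) + 2 * c\<^sup>2 * D\<^sup>2)"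
      by linarith
    then show ?thesis unfolding norm_mult using bnd[OF sin] Mh0 by (intro mult_mono) auto
  qed
  have "cmod (eloc x w s u) \<le> (Mh' * \<epsilon>) * \<Delta> + ((\<epsilon> * Mq + Mh * \<epsilon>) * L1) * \<Delta> + c\<^sup>2 / 2 * ((\<epsilon> * Mq' + Mh * \<epsilon>) * \<Delta>)
      + Mh * Mq' * ((L1\<^sup>2 * \<Delta> * \<epsilon> + 2 * \<bar>c\<bar> * (L1 * \<Delta>) * \<epsilon>) / 2) + Mh * (\<epsilon> * (2 * (L1\<^sup>2 * \<Delta>) + 2 * c\<^sup>2 * D\<^sup>2))"
    unfolding eloc_id[OF xc su incr] A_def[symmetric] D_def[symmetric]
    by (rule order_trans[OF norm5]) (use b1 b2 b3 b4 b5 in \<open>unfold A_def D_def, linarith\<close>)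
  also have "\<dots> \<le> \<epsilon> * (Mh' + (Mq + Mh) * L1 + c\<^sup>2 / 2 * (Mq' + Mh) + Mh * Mq' * (L1\<^sup>2 / 2 + \<bar>c\<bar> * L1)
       + 2 * Mh * L1\<^sup>2 + 2 * Mh * c\<^sup>2) * (\<Delta> + D\<^sup>2)"
  proof -
    define C0 where "C0 = Mh' + (Mq + Mh) * L1 + c\<^sup>2 / 2 * (Mq' + Mh) + Mh * Mq' * (L1\<^sup>2 / 2 + \<bar>c\<bar> * L1) + 2 * Mh * L1\<^sup>2"
    have C0: "C0 \<ge> 0" unfolding C0_def using Mh'0 Mh0 Mq0 Mq'0 L10 by (intro add_nonneg_nonneg mult_nonneg_nonneg) auto
    have lhs: "(Mh' * \<epsilon>) * \<Delta> + ((\<epsilon> * Mq + Mh * \<epsilon>) * L1) * \<Delta> + c\<^sup>2 / 2 * ((\<epsilon> * Mq' + Mh * \<epsilon>) * \<Delta>)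
      + Mh * Mq' * ((L1\<^sup>2 * \<Delta> * \<epsilon> + 2 * \<bar>c\<bar> * (L1 * \<Delta>) * \<epsilon>) / 2) + Mh * (\<epsilon> * (2 * (L1\<^sup>2 * \<Delta>) + 2 * c\<^sup>2 * D\<^sup>2))
      = \<epsilon> * C0 * \<Delta> + \<epsilon> * (2 * Mh * c\<^sup>2) * D\<^sup>2"
      unfolding C0_def by (simp add: algebra_simps add_divide_distrib)
    have rhs: "\<epsilon> * (Mh' + (Mq + Mh) * L1 + c\<^sup>2 / 2 * (Mq' + Mh) + Mh * Mq' * (L1\<^sup>2 / 2 + \<bar>c\<bar> * L1)
       + 2 * Mh * L1\<^sup>2 + 2 * Mh * c\<^sup>2) * (\<Delta> + D\<^sup>2)
       = \<epsilon> * C0 * \<Delta> + \<epsilon> * (2 * Mh * c\<^sup>2) * D\<^sup>2 + (\<epsilon> * C0 * D\<^sup>2 + \<epsilon> * (2 * Mh * c\<^sup>2) * \<Delta>)"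
      unfolding C0_def by (simp add: algebra_simps add_divide_distrib)
    have "0 \<le> \<epsilon> * C0 * D\<^sup>2 + \<epsilon> * (2 * Mh * c\<^sup>2) * \<Delta>"
      using \<epsilon>0 C0 Mh0 \<Delta>0 by (intro add_nonneg_nonneg mult_nonneg_nonneg) auto
    then show ?thesis unfolding lhs rhs by linarith
  qed
  finally show ?thesis unfolding \<Delta>_def D_def .
qed

end

lemma cbound:
  fixes f :: "real \<Rightarrow> 'b::real_normed_vector"
  assumes "continuous_on S f" "compact S"
  shows "\<exists>B\<ge>0. \<forall>x\<in>S. norm (f x) \<le> B"
proof -
  have "bounded (f ` S)" by (rule compact_imp_bounded[OF compact_continuous_image[OF assms]])
  then obtain B where "B > 0" "\<forall>y\<in>f ` S. norm y \<le> B" by (auto simp: bounded_pos)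
  then show ?thesis by (intro exI[of _ B]) auto
qed

lemma ucont:
  fixes f :: "real \<Rightarrow> 'b::real_normed_vector"
  assumes "continuous_on S f" "compact S" "e > 0"
  shows "\<exists>d>0. \<forall>x\<in>S. \<forall>y\<in>S. \<bar>x - y\<bar> < d \<longrightarrow> norm (f x - f y) \<le> e"
proof -
  have "uniformly_continuous_on S f" by (rule compact_uniformly_continuous[OF assms(1,2)])
  then obtain d where "d > 0" "\<forall>x\<in>S. \<forall>x'\<in>S. dist x' x < d \<longrightarrow> dist (f x') (f x) < e"
    unfolding uniformly_continuous_on_def using assms(3) by metis
  then show ?thesis
    by (intro exI[of _ d]) (auto simp: dist_norm intro: less_imp_le)
qed

context itoset
begin

lemma incr_bound:
  fixes x w :: "real \<Rightarrow> real"
  assumes xc: "continuous_on {0..T} x"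
    and incr: "\<forall>s\<in>{0..T}. \<forall>u\<in>{0..T}. s \<le> u \<longrightarrow> x u - x s = integral {s..u} (\<lambda>v. a + b * x v) + c * (w u - w s)"
    and xb: "\<forall>s\<in>{0..T}. \<bar>x s\<bar> \<le> K"
    and v: "v \<in> {0..T}" "v' \<in> {0..T}" "v' \<le> v"
  shows "\<bar>x v - x v'\<bar> \<le> (\<bar>a\<bar> + \<bar>b\<bar> * K) * (v - v') + \<bar>c\<bar> * \<bar>w v - w v'\<bar>"
proof -
  have sub: "{v'..v} \<subseteq> {0..T}" using v by auto
  have lin: "continuous_on {v'..v} (\<lambda>s. a + b * x s)"
    by (intro continuous_intros continuous_on_subset[OF xc sub])
  have "norm (integral {v'..v} (\<lambda>s. a + b * x s)) \<le> (\<bar>a\<bar> + \<bar>b\<bar> * K) * (v - v')"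
  proof (rule int_bound[OF lin v(3)])
    fix s assume "s \<in> {v'..v}"
    then have "\<bar>x s\<bar> \<le> K" using xb sub by auto
    then have "\<bar>b\<bar> * \<bar>x s\<bar> \<le> \<bar>b\<bar> * K" by (rule mult_left_mono) simp
    moreover have "\<bar>a + b * x s\<bar> \<le> \<bar>a\<bar> + \<bar>b * x s\<bar>" by (rule abs_triangle_ineq)
    ultimately show "norm (a + b * x s) \<le> \<bar>a\<bar> + \<bar>b\<bar> * K" by (simp add: abs_mult)
  qed
  moreover have "x v - x v' = integral {v'..v} (\<lambda>s. a + b * x s) + c * (w v - w v')" using incr v by auto
  moreover have "\<bar>integral {v'..v} (\<lambda>s. a + b * x s) + c * (w v - w v')\<bar> \<le> \<bar>integral {v'..v} (\<lambda>s. a + b * x s)\<bar> + \<bar>c * (w v - w v')\<bar>"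
    by (rule abs_triangle_ineq)
  ultimately show ?thesis by (simp add: abs_mult)
qed

lemma local_est:
  assumes K: "K \<ge> 0" and eps: "\<epsilon> > 0"
  shows "\<exists>\<eta>>0. \<exists>\<rho>>0. \<forall>\<rho>1 x w. 0 < \<rho>1 \<and> \<rho>1 \<le> \<rho> \<and> (continuous_on {0..T} x
      \<and> (\<forall>s\<in>{0..T}. \<forall>u\<in>{0..T}. s \<le> u \<longrightarrow> x u - x s = integral {s..u} (\<lambda>v. a + b * x v) + c * (w u - w s))
      \<and> (\<forall>s\<in>{0..T}. \<bar>x s\<bar> \<le> K)
      \<and> (\<forall>v\<in>{0..T}. \<forall>v'\<in>{0..T}. \<bar>v - v'\<bar> < \<rho>1 \<longrightarrow> \<bar>w v - w v'\<bar> \<le> \<eta>)) \<longrightarrow>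
      (\<forall>s u. 0 \<le> s \<longrightarrow> s \<le> u \<longrightarrow> u \<le> T \<longrightarrow> u - s < \<rho>1 \<longrightarrow> cmod (eloc x w s u) \<le> \<epsilon> * ((u - s) + (w u - w s)\<^sup>2))
      \<and> (\<forall>v\<in>{0..T}. \<forall>v'\<in>{0..T}. \<bar>v - v'\<bar> < \<rho>1 \<longrightarrow> cmod (h v * q' (x v) - h v' * q' (x v')) \<le> \<epsilon>)"
proof -
  obtain Mh where Mh: "Mh \<ge> 0" "\<forall>v\<in>{0..T}. cmod (h v) \<le> Mh" using cbound[OF hc] by auto
  obtain Mh' where Mh': "Mh' \<ge> 0" "\<forall>v\<in>{0..T}. cmod (h' v) \<le> Mh'" using cbound[OF h'c] by auto
  obtain Mq where Mq: "Mq \<ge> 0" "\<forall>y\<in>{-K..K}. cmod (q y) \<le> Mq" using cbound[OF qc] by blast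
  obtain Mq' where Mq': "Mq' \<ge> 0" "\<forall>y\<in>{-K..K}. cmod (q' y) \<le> Mq'" using cbound[OF q'c'] by blast
  define L1 where "L1 = \<bar>a\<bar> + \<bar>b\<bar> * K"
  have L1: "L1 \<ge> 0" unfolding L1_def using K by simp
  define Cst where "Cst = Mh' + (Mq + Mh) * L1 + c\<^sup>2 / 2 * (Mq' + Mh) + Mh * Mq' * (L1\<^sup>2 / 2 + \<bar>c\<bar> * L1)
       + 2 * Mh * L1\<^sup>2 + 2 * Mh * c\<^sup>2"
  have Cst: "Cst \<ge> 0" unfolding Cst_def using Mh Mh' Mq Mq' L1
    by (intro add_nonneg_nonneg mult_nonneg_nonneg) auto
  define \<epsilon>1 where "\<epsilon>1 = \<epsilon> / (Cst + Mq' + Mh + 1)"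
  have e1: "\<epsilon>1 > 0" unfolding \<epsilon>1_def using eps Cst Mq' Mh by simp
  have e1C: "\<epsilon>1 * Cst \<le> \<epsilon>" and e1g: "\<epsilon>1 * Mq' + Mh * \<epsilon>1 \<le> \<epsilon>"
  proof -
    have "\<epsilon>1 * (Cst + Mq' + Mh + 1) = \<epsilon>" unfolding \<epsilon>1_def using Cst Mq' Mh by simp
    then have eq: "\<epsilon>1 * Cst + \<epsilon>1 * Mq' + \<epsilon>1 * Mh + \<epsilon>1 = \<epsilon>" by (simp add: algebra_simps)
    have "\<epsilon>1 * Cst \<ge> 0" "\<epsilon>1 * Mq' \<ge> 0" "\<epsilon>1 * Mh \<ge> 0" using e1 Cst Mq' Mh by auto
    then show "\<epsilon>1 * Cst \<le> \<epsilon>" "\<epsilon>1 * Mq' + Mh * \<epsilon>1 \<le> \<epsilon>" using eq e1 by (simp_all add: mult.commute)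
  qed
  obtain dh where dh: "dh > 0" "\<forall>x\<in>{0..T}. \<forall>y\<in>{0..T}. \<bar>x - y\<bar> < dh \<longrightarrow> cmod (h x - h y) \<le> \<epsilon>1"
    using ucont[OF hc _ e1] by auto
  obtain dr where dr: "dr > 0" "\<forall>x\<in>{-K..K}. \<forall>y\<in>{-K..K}. \<bar>x - y\<bar> < dr \<longrightarrow> cmod (r2 x - r2 y) \<le> \<epsilon>1"
    using ucont[OF r2c _ e1] by blast
  obtain dq where dq: "dq > 0" "\<forall>x\<in>{-K..K}. \<forall>y\<in>{-K..K}. \<bar>x - y\<bar> < dq \<longrightarrow> cmod (q x - q y) \<le> \<epsilon>1"
    using ucont[OF qc _ e1] by blast
  obtain dq' where dq': "dq' > 0" "\<forall>x\<in>{-K..K}. \<forall>y\<in>{-K..K}. \<bar>x - y\<bar> < dq' \<longrightarrow> cmod (q' x - q' y) \<le> \<epsilon>1"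
    using ucont[OF q'c' _ e1] by blast
  define d where "d = min dr (min dq dq')"
  have d: "d > 0" "d \<le> dr" "d \<le> dq" "d \<le> dq'" unfolding d_def using dr dq dq' by auto
  define \<rho> where "\<rho> = min (min dh 1) (min \<epsilon>1 (d / (2 * (L1 + 1))))"
  define \<eta> where "\<eta> = min \<epsilon>1 (d / (2 * (\<bar>c\<bar> + 1)))"
  have \<rho>: "\<rho> > 0" "\<rho> \<le> dh" "\<rho> \<le> 1" "\<rho> \<le> \<epsilon>1" "\<rho> \<le> d / (2 * (L1 + 1))"
    unfolding \<rho>_def using dh e1 d L1 by auto
  have \<eta>: "\<eta> > 0" "\<eta> \<le> \<epsilon>1" "\<eta> \<le> d / (2 * (\<bar>c\<bar> + 1))"
    unfolding \<eta>_def using e1 d by auto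
  have c\<eta>: "\<bar>c\<bar> * \<eta> < d / 2"
  proof -
    have "\<bar>c\<bar> * \<eta> \<le> \<bar>c\<bar> * (d / (2 * (\<bar>c\<bar> + 1)))" using \<eta>(3) by (rule mult_left_mono) simp
    also have "\<dots> < d / 2" using d(1) by (simp add: field_simps)
    finally show ?thesis .
  qed
  show ?thesis
  proof (rule exI[of _ \<eta>], rule conjI[OF \<eta>(1)], rule exI[of _ \<rho>], rule conjI[OF \<rho>(1)], intro allI impI)
    fix \<rho>1 :: real
    fix x w :: "real \<Rightarrow> real"
    assume H: "0 < \<rho>1 \<and> \<rho>1 \<le> \<rho> \<and> continuous_on {0..T} x
      \<and> (\<forall>s\<in>{0..T}. \<forall>u\<in>{0..T}. s \<le> u \<longrightarrow> x u - x s = integral {s..u} (\<lambda>v. a + b * x v) + c * (w u - w s))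
      \<and> (\<forall>s\<in>{0..T}. \<bar>x s\<bar> \<le> K)
      \<and> (\<forall>v\<in>{0..T}. \<forall>v'\<in>{0..T}. \<bar>v - v'\<bar> < \<rho>1 \<longrightarrow> \<bar>w v - w v'\<bar> \<le> \<eta>)"
    then have xc: "continuous_on {0..T} x"
      and incr: "\<forall>s\<in>{0..T}. \<forall>u\<in>{0..T}. s \<le> u \<longrightarrow> x u - x s = integral {s..u} (\<lambda>v. a + b * x v) + c * (w u - w s)"
      and xb: "\<forall>s\<in>{0..T}. \<bar>x s\<bar> \<le> K"
      and wo: "\<forall>v\<in>{0..T}. \<forall>v'\<in>{0..T}. \<bar>v - v'\<bar> < \<rho>1 \<longrightarrow> \<bar>w v - w v'\<bar> \<le> \<eta>" by auto
    have \<rho>1f: "\<rho>1 > 0" "\<rho>1 \<le> dh" "\<rho>1 \<le> 1" "\<rho>1 \<le> \<epsilon>1" "\<rho>1 \<le> d / (2 * (L1 + 1))"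
      using H \<rho> by auto
    have L1\<rho>: "L1 * \<rho>1 < d / 2"
  proof -
    have "L1 * \<rho>1 \<le> L1 * (d / (2 * (L1 + 1)))" using \<rho>1f(5) L1 by (rule mult_left_mono)
    also have "\<dots> < d / 2" using L1 d(1) by (simp add: field_simps)
    finally show ?thesis .
  qed
    have xK: "x v \<in> {-K..K}" if "v \<in> {0..T}" for v using xb that by (force simp: abs_le_iff)
    have xo1: "\<bar>x v - x v'\<bar> < d" if v: "v \<in> {0..T}" "v' \<in> {0..T}" "v' \<le> v" "v - v' < \<rho>1" for v v'
    proof -
      have "\<bar>x v - x v'\<bar> \<le> L1 * (v - v') + \<bar>c\<bar> * \<bar>w v - w v'\<bar>"
        using incr_bound[OF xc incr xb v(1-3)] unfolding L1_def .
      also have "\<dots> \<le> L1 * \<rho>1 + \<bar>c\<bar> * \<eta>"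
        using wo v L1 by (intro add_mono mult_left_mono) auto
      also have "\<dots> < d" using L1\<rho> c\<eta> by linarith
      finally show ?thesis .
    qed
    have xo: "\<bar>x v - x v'\<bar> < d" if v: "v \<in> {0..T}" "v' \<in> {0..T}" "\<bar>v - v'\<bar> < \<rho>1" for v v'
    proof (cases "v' \<le> v")
      case True then show ?thesis using xo1[OF v(1,2) True] v(3) by simp
    next
      case False then show ?thesis using xo1[OF v(2,1)] v(3) by (simp add: abs_minus_commute)
    qed
    have C1: "\<forall>s u. 0 \<le> s \<longrightarrow> s \<le> u \<longrightarrow> u \<le> T \<longrightarrow> u - s < \<rho>1 \<longrightarrow> cmod (eloc x w s u) \<le> \<epsilon> * ((u - s) + (w u - w s)\<^sup>2)"
    proof (intro allI impI)
      fix s u assume su: "0 \<le> s" "s \<le> u" "u \<le> T" "u - s < \<rho>1"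
      have sT: "s \<in> {0..T}" and uT: "u \<in> {0..T}" using su by auto
      have vT: "v \<in> {0..T}" if "v \<in> {s..u}" for v using that su by auto
      have "cmod (eloc x w s u) \<le> \<epsilon>1 * Cst * ((u - s) + (w u - w s)\<^sup>2)"
        unfolding Cst_def
      proof (rule eloc_bound[OF xc su(1-3)])
        show "x u - x s = integral {s..u} (\<lambda>v. a + b * x v) + c * (w u - w s)" using incr sT uT su by auto
        show "u - s \<le> \<epsilon>1" "u - s \<le> 1" using su \<rho>1f by auto
        have "\<bar>u - s\<bar> < \<rho>1" using su by simp
        then have "\<bar>w u - w s\<bar> \<le> \<eta>" using wo sT uT by blast
        then show "\<bar>w u - w s\<bar> \<le> \<epsilon>1" using \<eta> by linarith
      next
        fix v assume v: "v \<in> {s..u}"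
        have "\<bar>a + b * x v\<bar> \<le> L1"
        proof -
          have "\<bar>b\<bar> * \<bar>x v\<bar> \<le> \<bar>b\<bar> * K" using xb vT[OF v] by (intro mult_left_mono) auto
          moreover have "\<bar>a + b * x v\<bar> \<le> \<bar>a\<bar> + \<bar>b * x v\<bar>" by (rule abs_triangle_ineq)
          ultimately show ?thesis unfolding L1_def by (simp add: abs_mult)
        qed
        then show "cmod (h' v) \<le> Mh' \<and> cmod (h v) \<le> Mh \<and> cmod (q (x v)) \<le> Mq \<and> cmod (q' (x v)) \<le> Mq' \<and> \<bar>a + b * x v\<bar> \<le> L1"
          using Mh Mh' Mq Mq' xK[OF vT[OF v]] vT[OF v] by auto
        have a1: "\<bar>x v - x u\<bar> < d" using xo[OF vT[OF v] uT] v su by auto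
        have a2: "\<bar>x v - x s\<bar> < d" using xo[OF vT[OF v] sT] v su by auto
        have a3: "\<bar>v - s\<bar> < dh" using v su \<rho>1f by auto
        have m1: "cmod (r2 (x v) - r2 (x u)) \<le> \<epsilon>1"
          using dr(2)[rule_format, OF xK[OF vT[OF v]] xK[OF uT]] a1 d(2) by linarith
        have m2: "cmod (h v - h s) \<le> \<epsilon>1"
          using dh(2)[rule_format, OF vT[OF v] sT] a3 by linarith
        have m3: "cmod (q (x v) - q (x s)) \<le> \<epsilon>1"
          using dq(2)[rule_format, OF xK[OF vT[OF v]] xK[OF sT]] a2 d(3) by linarith
        have m4: "cmod (q' (x v) - q' (x s)) \<le> \<epsilon>1"
          using dq'(2)[rule_format, OF xK[OF vT[OF v]] xK[OF sT]] a2 d(4) by linarith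
        show "cmod (r2 (x v) - r2 (x u)) \<le> \<epsilon>1 \<and> cmod (h v - h s) \<le> \<epsilon>1 \<and> cmod (q (x v) - q (x s)) \<le> \<epsilon>1 \<and> cmod (q' (x v) - q' (x s)) \<le> \<epsilon>1"
          using m1 m2 m3 m4 by blast
      next
        fix z assume z: "z \<in> {min (x s) (x u)..max (x s) (x u)}"
        have zK: "z \<in> {-K..K}" using z xK[OF sT] xK[OF uT] by auto
        have "\<bar>z - x s\<bar> \<le> \<bar>x u - x s\<bar>" using z by auto
        also have "\<bar>x u - x s\<bar> < d" using xo[OF uT sT] su by auto
        finally show "cmod (q' z - q' (x s)) \<le> \<epsilon>1" using dq'(2)[rule_format, OF zK xK[OF sT]] d(4) by linarith
      qed
      also have "\<dots> \<le> \<epsilon> * ((u - s) + (w u - w s)\<^sup>2)"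
        using e1C su by (intro mult_right_mono) auto
      finally show "cmod (eloc x w s u) \<le> \<epsilon> * ((u - s) + (w u - w s)\<^sup>2)" .
    qed
    have C2: "\<forall>v\<in>{0..T}. \<forall>v'\<in>{0..T}. \<bar>v - v'\<bar> < \<rho>1 \<longrightarrow> cmod (h v * q' (x v) - h v' * q' (x v')) \<le> \<epsilon>"
    proof (intro ballI impI)
      fix v v' assume v: "v \<in> {0..T}" "v' \<in> {0..T}" "\<bar>v - v'\<bar> < \<rho>1"
      have "cmod (h v * q' (x v) - h v' * q' (x v')) = cmod ((h v - h v') * q' (x v) + h v' * (q' (x v) - q' (x v')))"
        by (simp add: algebra_simps)
      also have "\<dots> \<le> cmod ((h v - h v') * q' (x v)) + cmod (h v' * (q' (x v) - q' (x v')))" by (rule norm_triangle_ineq)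
      also have "\<dots> \<le> \<epsilon>1 * Mq' + Mh * \<epsilon>1"
      proof -
        have "cmod (h v - h v') \<le> \<epsilon>1" using dh(2)[rule_format, OF v(1,2)] v(3) \<rho>1f(2) by linarith
        moreover have "cmod (q' (x v) - q' (x v')) \<le> \<epsilon>1"
          using dq'(2)[rule_format, OF xK[OF v(1)] xK[OF v(2)]] xo[OF v] d(4) by linarith
        moreover have "cmod (q' (x v)) \<le> Mq'" "cmod (h v') \<le> Mh" using Mq'(2) xK[OF v(1)] Mh(2) v(2) by auto
        ultimately show ?thesis unfolding norm_mult using Mh(1) Mq'(1) e1
          by (intro add_mono mult_mono) auto
      qed
      also have "\<dots> \<le> \<epsilon>" by (rule e1g)
      finally show "cmod (h v * q' (x v) - h v' * q' (x v')) \<le> \<epsilon>" .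
    qed
    show "(\<forall>s u. 0 \<le> s \<longrightarrow> s \<le> u \<longrightarrow> u \<le> T \<longrightarrow> u - s < \<rho>1 \<longrightarrow> cmod (eloc x w s u) \<le> \<epsilon> * ((u - s) + (w u - w s)\<^sup>2)) \<and> (\<forall>v\<in>{0..T}. \<forall>v'\<in>{0..T}. \<bar>v - v'\<bar> < \<rho>1 \<longrightarrow> cmod (h v * q' (x v) - h v' * q' (x v')) \<le> \<epsilon>)" using C1 C2 by (rule conjI)
  qed
qed

end

context itoset begin
lemma g_bound:
  assumes K: "K \<ge> 0"
  shows "\<exists>G\<ge>0. \<forall>x. (\<forall>s\<in>{0..T}. \<bar>x s\<bar> \<le> K) \<longrightarrow> (\<forall>v\<in>{0..T}. cmod (h v * q' (x v)) \<le> G)"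
proof -
  obtain Mh where Mh: "Mh \<ge> 0" "\<forall>v\<in>{0..T}. cmod (h v) \<le> Mh" using cbound[OF hc] by auto
  obtain Mq' where Mq': "Mq' \<ge> 0" "\<forall>y\<in>{-K..K}. cmod (q' y) \<le> Mq'" using cbound[OF q'c'] by blast
  show ?thesis
  proof (intro exI[of _ "Mh * Mq'"] conjI allI impI ballI)
    show "0 \<le> Mh * Mq'" using Mh Mq' by simp
    fix x :: "real \<Rightarrow> real" and v assume x: "\<forall>s\<in>{0..T}. \<bar>x s\<bar> \<le> K" and v: "v \<in> {0..T}"
    have "x v \<in> {-K..K}" using x v by (force simp: abs_le_iff)
    then show "cmod (h v * q' (x v)) \<le> Mh * Mq'"
      unfolding norm_mult using Mh Mq' v by (intro mult_mono) auto
  qed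
qed
end

lemma tau_mono:
  fixes \<tau> :: "nat \<Rightarrow> real"
  assumes "\<forall>i<n. \<tau> i < \<tau> (Suc i)" "i \<le> j" "j \<le> n"
  shows "\<tau> i \<le> \<tau> j"
  using assms(2,3)
proof (induction j)
  case 0 then show ?case by simp
next
  case (Suc j)
  show ?case
  proof (cases "i = Suc j")
    case True then show ?thesis by simp
  next
    case False
    then have "\<tau> i \<le> \<tau> j" using Suc by auto
    also have "\<tau> j \<le> \<tau> (Suc j)" using assms(1) Suc(3) by (simp add: less_imp_le)
    finally show ?thesis .
  qed
qed

lemma int_partition:
  fixes f :: "real \<Rightarrow> 'a::banach"
  assumes inc: "\<forall>i<n. \<tau> i < \<tau> (Suc i)" and f: "f integrable_on {\<tau> 0..\<tau> n}"
  shows "(\<Sum>i<n. integral {\<tau> i..\<tau> (Suc i)} f) = integral {\<tau> 0..\<tau> n} f"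
  using inc f
proof (induction n)
  case 0 then show ?case by simp
next
  case (Suc n)
  have m1: "\<tau> 0 \<le> \<tau> n" using tau_mono[OF Suc(2)] by simp
  have m2: "\<tau> n \<le> \<tau> (Suc n)" using Suc(2) by (simp add: less_imp_le)
  have "f integrable_on {\<tau> 0..\<tau> n}"
    by (rule integrable_subinterval_real[OF Suc(3)]) (use m1 m2 in auto)
  then have ih: "(\<Sum>i<n. integral {\<tau> i..\<tau> (Suc i)} f) = integral {\<tau> 0..\<tau> n} f"
    using Suc by auto
  show ?case using Henstock_Kurzweil_Integration.integral_combine[OF m1 m2 Suc(3)] ih by simp
qed

lemma riemann:
  fixes f :: "real \<Rightarrow> complex"
  assumes f: "continuous_on {t..T} f" and e: "e > 0"
  shows "\<exists>d>0. \<forall>\<tau> n. \<tau> 0 = t \<and> \<tau> n = T \<and> (\<forall>i<n. \<tau> i < \<tau> (Suc i)) \<and> (\<forall>i<n. \<tau> (Suc i) - \<tau> i < d) \<longrightarrow>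
      cmod ((\<Sum>i<n. f (\<tau> i) * of_real (\<tau> (Suc i) - \<tau> i)) - integral {t..T} f) \<le> e * (T - t)"
proof -
  obtain d where d: "d > 0" "\<forall>x\<in>{t..T}. \<forall>y\<in>{t..T}. \<bar>x - y\<bar> < d \<longrightarrow> norm (f x - f y) \<le> e"
    using ucont[OF f _ e] by auto
  show ?thesis
  proof (intro exI[of _ d] conjI d(1) allI impI)
    fix \<tau> :: "nat \<Rightarrow> real" and n
    assume H: "\<tau> 0 = t \<and> \<tau> n = T \<and> (\<forall>i<n. \<tau> i < \<tau> (Suc i)) \<and> (\<forall>i<n. \<tau> (Suc i) - \<tau> i < d)"
    then have t0: "\<tau> 0 = t" and tn: "\<tau> n = T" and inc: "\<forall>i<n. \<tau> i < \<tau> (Suc i)"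
      and mesh: "\<forall>i<n. \<tau> (Suc i) - \<tau> i < d" by auto
    have rng: "\<tau> i \<in> {t..T}" if "i \<le> n" for i
      using tau_mono[OF inc, of 0 i] tau_mono[OF inc, of i n] that t0 tn by auto
    have sub: "{\<tau> i..\<tau> (Suc i)} \<subseteq> {t..T}" if "i < n" for i using rng[of i] rng[of "Suc i"] that by auto
    have fi: "f integrable_on {\<tau> 0..\<tau> n}" using integrable_continuous_interval[OF f] t0 tn by simp
    have "integral {t..T} f = (\<Sum>i<n. integral {\<tau> i..\<tau> (Suc i)} f)"
      using int_partition[OF inc fi] t0 tn by simp
    then have "(\<Sum>i<n. f (\<tau> i) * of_real (\<tau> (Suc i) - \<tau> i)) - integral {t..T} f
        = (\<Sum>i<n. f (\<tau> i) * of_real (\<tau> (Suc i) - \<tau> i) - integral {\<tau> i..\<tau> (Suc i)} f)"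
      by (simp add: sum_subtractf)
    also have "cmod \<dots> \<le> (\<Sum>i<n. cmod (f (\<tau> i) * of_real (\<tau> (Suc i) - \<tau> i) - integral {\<tau> i..\<tau> (Suc i)} f))"
      by (rule norm_sum)
    also have "\<dots> \<le> (\<Sum>i<n. e * (\<tau> (Suc i) - \<tau> i))"
    proof (rule sum_mono)
      fix i assume i: "i \<in> {..<n}"
      have le: "\<tau> i \<le> \<tau> (Suc i)" using inc i by (simp add: less_imp_le)
      have fc: "continuous_on {\<tau> i..\<tau> (Suc i)} f" using continuous_on_subset[OF f sub] i by simp
      have "integral {\<tau> i..\<tau> (Suc i)} (\<lambda>v. f (\<tau> i) - f v) = of_real (\<tau> (Suc i) - \<tau> i) * f (\<tau> i) - integral {\<tau> i..\<tau> (Suc i)} f"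
        using integral_diff[OF integrable_const_ivl integrable_continuous_interval[OF fc]] le
        by (simp add: scaleR_conv_of_real)
      moreover have "norm (integral {\<tau> i..\<tau> (Suc i)} (\<lambda>v. f (\<tau> i) - f v)) \<le> e * (\<tau> (Suc i) - \<tau> i)"
      proof (rule int_bound)
        show "continuous_on {\<tau> i..\<tau> (Suc i)} (\<lambda>v. f (\<tau> i) - f v)" by (intro continuous_intros fc)
        show "\<tau> i \<le> \<tau> (Suc i)" by (rule le)
        fix v assume v: "v \<in> {\<tau> i..\<tau> (Suc i)}"
        have "\<bar>\<tau> i - v\<bar> < d" using v mesh i by auto
        then show "norm (f (\<tau> i) - f v) \<le> e" using d(2) rng[of i] sub[of i] v i by auto
      qed
      ultimately show "cmod (f (\<tau> i) * of_real (\<tau> (Suc i) - \<tau> i) - integral {\<tau> i..\<tau> (Suc i)} f) \<le> e * (\<tau> (Suc i) - \<tau> i)"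
        by (simp add: mult.commute)
    qed
    also have "\<dots> = e * (T - t)"
      by (simp add: sum_distrib_left[symmetric] sum_lessThan_telescope t0 tn)
    finally show "cmod ((\<Sum>i<n. f (\<tau> i) * of_real (\<tau> (Suc i) - \<tau> i)) - integral {t..T} f) \<le> e * (T - t)" .
  qed
qed


lemma meas_integral:
  fixes F :: "real \<Rightarrow> 'a \<Rightarrow> complex"
  assumes tT: "t \<le> T" and meas: "\<forall>s\<in>{t..T}. (\<lambda>\<omega>. F s \<omega>) \<in> borel_measurable M"
    and cont: "\<forall>\<omega>\<in>space M. continuous_on {t..T} (\<lambda>s. F s \<omega>)"
  shows "(\<lambda>\<omega>. integral {t..T} (\<lambda>s. F s \<omega>)) \<in> borel_measurable M"
proof (cases "t = T")
  case True then show ?thesis by simp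
next
  case False
  then have tT': "t < T" using tT by simp
  define \<tau> where "\<tau> = (\<lambda>N i. t + real i * (T - t) / real (Suc N))"
  have \<tau>0: "\<tau> N 0 = t" for N unfolding \<tau>_def by simp
  have \<tau>n: "\<tau> N (Suc N) = T" for N
  proof -
    have "real (Suc N) \<noteq> 0" by (rule of_nat_neq_0)
    then have "real (Suc N) * (T - t) / real (Suc N) = T - t" by simp
    then show ?thesis unfolding \<tau>_def by simp
  qed
  have \<tau>d: "\<tau> N (Suc i) - \<tau> N i = (T - t) / real (Suc N)" for N i
    unfolding \<tau>_def by (simp add: diff_divide_distrib[symmetric] algebra_simps)
  have \<tau>inc: "\<forall>i<Suc N. \<tau> N i < \<tau> N (Suc i)" for N
    using \<tau>d[of N] tT' by (auto simp: algebra_simps)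
  have \<tau>rng: "\<tau> N i \<in> {t..T}" if "i \<le> Suc N" for N i
    using tau_mono[OF \<tau>inc[of N], of 0 i] tau_mono[OF \<tau>inc[of N], of i "Suc N"] that \<tau>0 \<tau>n by auto
  define R where "R = (\<lambda>N \<omega>. \<Sum>i<Suc N. F (\<tau> N i) \<omega> * of_real (\<tau> N (Suc i) - \<tau> N i))"
  have Rm: "R N \<in> borel_measurable M" for N
    unfolding R_def
  proof (intro borel_measurable_sum borel_measurable_times borel_measurable_const)
    fix i assume "i \<in> {..<Suc N}"
    then show "(\<lambda>\<omega>. F (\<tau> N i) \<omega>) \<in> borel_measurable M" using meas \<tau>rng[of i N] by auto
  qed
  show ?thesis
  proof (rule borel_measurable_LIMSEQ_metric[OF Rm])
    fix \<omega> assume w: "\<omega> \<in> space M"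
    show "(\<lambda>N. R N \<omega>) \<longlonglongrightarrow> integral {t..T} (\<lambda>s. F s \<omega>)"
    proof (rule LIMSEQ_I)
      fix e :: real assume e: "e > 0"
      have e': "e / (2 * (T - t)) > 0" using e tT' by simp
      obtain d where d: "d > 0" "\<forall>\<tau> n. \<tau> 0 = t \<and> \<tau> n = T \<and> (\<forall>i<n. \<tau> i < \<tau> (Suc i)) \<and> (\<forall>i<n. \<tau> (Suc i) - \<tau> i < d) \<longrightarrow>
          cmod ((\<Sum>i<n. F (\<tau> i) \<omega> * of_real (\<tau> (Suc i) - \<tau> i)) - integral {t..T} (\<lambda>s. F s \<omega>)) \<le> e / (2 * (T - t)) * (T - t)"
        using riemann[OF cont[rule_format, OF w] e'] by blast
      obtain N0 where N0: "(T - t) / d < real N0" using reals_Archimedean2 by blast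
      show "\<exists>no. \<forall>N\<ge>no. norm (R N \<omega> - integral {t..T} (\<lambda>s. F s \<omega>)) < e"
      proof (intro exI[of _ N0] allI impI)
        fix N assume N: "N0 \<le> N"
        have "(T - t) / d < real (Suc N)" using N0 N by simp
        then have md: "(T - t) / real (Suc N) < d" using d(1) by (simp add: field_simps)
        have "cmod (R N \<omega> - integral {t..T} (\<lambda>s. F s \<omega>)) \<le> e / (2 * (T - t)) * (T - t)"
          unfolding R_def using d(2)[rule_format, of "\<tau> N" "Suc N"] \<tau>0 \<tau>n \<tau>inc \<tau>d md by simp
        also have "\<dots> = e / 2" using tT' by (simp add: field_simps)
        also have "\<dots> < e" using e by simp
        finally show "norm (R N \<omega> - integral {t..T} (\<lambda>s. F s \<omega>)) < e" .
      qed
    qed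
  qed
qed

context itoset begin

lemma decomp:
  fixes x w :: "real \<Rightarrow> real" and \<tau> :: "nat \<Rightarrow> real"
  assumes xc: "continuous_on {0..T} x" and t: "0 \<le> t" "t \<le> T"
    and t0: "\<tau> 0 = t" and tn: "\<tau> n = T" and inc: "\<forall>i<n. \<tau> i < \<tau> (Suc i)"
  shows "(\<Sum>i<n. h (\<tau> i) * (of_real c * q (x (\<tau> i))) * of_real (w (\<tau> (Suc i)) - w (\<tau> i)))
      - (integral {t..T} (\<lambda>s. h s * r1 (x s) - h' s * r2 (x s)) + h T * r2 (x T) - h t * r2 (x t))
    = (\<Sum>i<n. eloc x w (\<tau> i) (\<tau> (Suc i)))
      - of_real (c\<^sup>2 / 2) * (\<Sum>i<n. (h (\<tau> i) * q' (x (\<tau> i))) * of_real ((w (\<tau> (Suc i)) - w (\<tau> i))\<^sup>2 - (\<tau> (Suc i) - \<tau> i)))"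
proof -
  define G where "G = (\<lambda>s. h' s * r2 (x s) - h s * r1 (x s))"
  define F where "F = (\<lambda>s. h s * r2 (x s))"
  have sub: "{t..T} \<subseteq> {0..T}" using t by auto
  have r1c: "continuous_on S r1" for S
  proof -
    have "r1 = (\<lambda>y. - (of_real (a + b * y) * q y + of_real (c\<^sup>2 / 2) * q' y))" using r1e by auto
    moreover have "continuous_on S (\<lambda>y. - (of_real (a + b * y) * q y + of_real (c\<^sup>2 / 2) * q' y))"
      by (intro continuous_intros qc q'c')
    ultimately show ?thesis by simp
  qed
  have Gc: "continuous_on {t..T} G" unfolding G_def
    using continuous_on_subset[OF xc sub] continuous_on_subset[OF hc sub] continuous_on_subset[OF h'c sub]
    by (intro continuous_intros continuous_on_compose2[OF r2c] continuous_on_compose2[OF r1c]) auto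
  have Gi: "G integrable_on {\<tau> 0..\<tau> n}" using integrable_continuous_interval[OF Gc] t0 tn by simp
  have "(\<Sum>i<n. integral {\<tau> i..\<tau> (Suc i)} G) = integral {t..T} G"
    using int_partition[OF inc Gi] t0 tn by simp
  also have "\<dots> = - integral {t..T} (\<lambda>s. h s * r1 (x s) - h' s * r2 (x s))"
    unfolding G_def by (subst integral_neg[symmetric]) (simp add: algebra_simps)
  finally have ip: "(\<Sum>i<n. integral {\<tau> i..\<tau> (Suc i)} G) = - integral {t..T} (\<lambda>s. h s * r1 (x s) - h' s * r2 (x s))" .
  have tel: "(\<Sum>i<n. F (\<tau> (Suc i)) - F (\<tau> i)) = F T - F t"
    using sum_lessThan_telescope[of "\<lambda>i. F (\<tau> i)" n] t0 tn by simp
  have "(\<Sum>i<n. eloc x w (\<tau> i) (\<tau> (Suc i)))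
      = (\<Sum>i<n. h (\<tau> i) * (of_real c * q (x (\<tau> i))) * of_real (w (\<tau> (Suc i)) - w (\<tau> i)))
        - (\<Sum>i<n. F (\<tau> (Suc i)) - F (\<tau> i)) + (\<Sum>i<n. integral {\<tau> i..\<tau> (Suc i)} G)
        + of_real (c\<^sup>2 / 2) * (\<Sum>i<n. (h (\<tau> i) * q' (x (\<tau> i))) * of_real ((w (\<tau> (Suc i)) - w (\<tau> i))\<^sup>2 - (\<tau> (Suc i) - \<tau> i)))"
    unfolding eloc_def F_def G_def
    by (simp add: sum.distrib sum_subtractf sum_distrib_left mult.assoc)
  then have E: "(\<Sum>i<n. eloc x w (\<tau> i) (\<tau> (Suc i)))
      = (\<Sum>i<n. h (\<tau> i) * (of_real c * q (x (\<tau> i))) * of_real (w (\<tau> (Suc i)) - w (\<tau> i)))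
        - (F T - F t) + (- integral {t..T} (\<lambda>s. h s * r1 (x s) - h' s * r2 (x s)))
        + of_real (c\<^sup>2 / 2) * (\<Sum>i<n. (h (\<tau> i) * q' (x (\<tau> i))) * of_real ((w (\<tau> (Suc i)) - w (\<tau> i))\<^sup>2 - (\<tau> (Suc i) - \<tau> i)))"
    by (simp only: tel ip)
  have gen: "E = SA - (FT - Ft) + (- I0) + k * SB \<Longrightarrow> SA - (I0 + FT - Ft) = E - k * SB"
    for E SA FT Ft I0 k SB :: complex by (simp add: algebra_simps)
  show ?thesis using gen[OF E] unfolding F_def .
qed

end

lemma block_index:
  fixes \<tau> :: "nat \<Rightarrow> real" and m :: nat
  assumes tT: "t < T" and m: "m \<ge> 1" and r: "\<tau> i \<in> {t..<T}"
  defines "k \<equiv> nat \<lfloor>(\<tau> i - t) * real m / (T - t)\<rfloor>"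
  shows "k < m" "t + real k * (T - t) / real m \<le> \<tau> i" "\<tau> i < t + real (Suc k) * (T - t) / real m"
proof -
  define z where "z = (\<tau> i - t) * real m / (T - t)"
  have z0: "z \<ge> 0" unfolding z_def using r tT by simp
  have zm: "z < real m" unfolding z_def using r tT m by (simp add: field_simps)
  have kz: "real k \<le> z" "z < real k + 1" unfolding k_def z_def[symmetric] using z0
    by (simp_all add: of_nat_nat)
  show "k < m" using kz zm by linarith
  have e: "\<tau> i = t + z * (T - t) / real m" unfolding z_def using tT m by (simp add: field_simps)
  show "t + real k * (T - t) / real m \<le> \<tau> i" unfolding e using kz tT m
    by (simp add: divide_right_mono mult_right_mono)
  show "\<tau> i < t + real (Suc k) * (T - t) / real m" unfolding e using kz tT m
    by (simp add: divide_strict_right_mono mult_strict_right_mono)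
qed

context itoset begin

lemma conv_main:
  fixes M :: "'a measure" and W X :: "real \<Rightarrow> 'a \<Rightarrow> real"
  assumes BM: "brownian_motion M W"
    and X_meas: "\<forall>s\<in>{0..T}. X s \<in> borel_measurable M"
    and X_cont: "\<forall>\<omega>\<in>space M. continuous_on {0..T} (\<lambda>s. X s \<omega>)"
    and X_incr: "\<forall>\<omega>\<in>space M. \<forall>s\<in>{0..T}. \<forall>u\<in>{0..T}. s \<le> u \<longrightarrow>
        X u \<omega> - X s \<omega> = integral {s..u} (\<lambda>v. a + b * X v \<omega>) + c * (W u \<omega> - W s \<omega>)"
    and t: "0 \<le> t" "t < T" and e0: "\<epsilon>0 > 0"
  shows "\<exists>\<delta>>0. \<forall>\<tau> n. is_partition \<tau> n t T \<and> (\<forall>i<n. \<tau> (Suc i) - \<tau> i < \<delta>) \<longrightarrow>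
     measure M {\<omega>\<in>space M. \<epsilon>0 \<le> cmod (ito_sum W (\<lambda>s \<omega>. h s * (of_real c * q (X s \<omega>))) \<tau> n \<omega>
        - (integral {t..T} (\<lambda>s. h s * r1 (X s \<omega>) - h' s * r2 (X s \<omega>)) + h T * r2 (X T \<omega>) - h t * r2 (X t \<omega>)))} \<le> \<epsilon>0"
proof -
  have P: "prob_space M" using BM unfolding brownian_motion_def by auto
  interpret prob_space M by (rule P)
  have Wm: "\<forall>s\<in>{0..T}. W s \<in> borel_measurable M" using BM unfolding brownian_motion_def by auto
  have Wc: "\<forall>\<omega>\<in>space M. continuous_on {0..T} (\<lambda>s. W s \<omega>)"
    using BM unfolding brownian_motion_def by (auto intro: continuous_on_subset)
  have e4: "\<epsilon>0 / 4 > 0" using e0 by simp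
  obtain K0 where B1m: "{\<omega>\<in>space M. \<exists>s\<in>QT T. K0 < \<bar>X s \<omega>\<bar>} \<in> sets M"
    and B1p: "measure M {\<omega>\<in>space M. \<exists>s\<in>QT T. K0 < \<bar>X s \<omega>\<bar>} \<le> \<epsilon>0 / 4"
    using bound_event[OF P T X_meas X_cont e4] by blast
  define K where "K = max K0 0"
  have K: "K \<ge> 0" "K0 \<le> K" unfolding K_def by auto
  obtain G where G: "G \<ge> 0" "\<forall>x. (\<forall>s\<in>{0..T}. \<bar>x s\<bar> \<le> K) \<longrightarrow> (\<forall>v\<in>{0..T}. cmod (h v * q' (x v)) \<le> G)"
    using g_bound[OF K(1)] by blast
  define Lb where "Lb = T - t + 1"
  have Lb: "Lb \<ge> 1" "T - t \<le> Lb" unfolding Lb_def using t by auto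
  define \<epsilon> where "\<epsilon> = \<epsilon>0 / (4 * Lb * (1 + c\<^sup>2))"
  have \<epsilon>: "\<epsilon> > 0" unfolding \<epsilon>_def using e0 Lb by (simp add: add_pos_nonneg)
  have \<epsilon>eq: "2 * \<epsilon> * Lb * (1 + c\<^sup>2) = \<epsilon>0 / 2"
  proof -
    have "1 + c\<^sup>2 > 0" by (simp add: add_pos_nonneg)
    then have nz: "4 * Lb * (1 + c\<^sup>2) \<noteq> 0" using Lb by simp
    have a: "\<epsilon> * (4 * Lb * (1 + c\<^sup>2)) = \<epsilon>0" unfolding \<epsilon>_def using nz by simp
    have "2 * \<epsilon> * Lb * (1 + c\<^sup>2) = (\<epsilon> * (4 * Lb * (1 + c\<^sup>2))) / 2" by (simp add: algebra_simps)
    then show ?thesis using a by simp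
  qed
  obtain \<eta> \<rho> where \<eta>: "\<eta> > 0" and \<rho>: "\<rho> > 0" and LE: "\<forall>\<rho>1 x w. 0 < \<rho>1 \<and> \<rho>1 \<le> \<rho> \<and> (continuous_on {0..T} x
      \<and> (\<forall>s\<in>{0..T}. \<forall>u\<in>{0..T}. s \<le> u \<longrightarrow> x u - x s = integral {s..u} (\<lambda>v. a + b * x v) + c * (w u - w s))
      \<and> (\<forall>s\<in>{0..T}. \<bar>x s\<bar> \<le> K)
      \<and> (\<forall>v\<in>{0..T}. \<forall>v'\<in>{0..T}. \<bar>v - v'\<bar> < \<rho>1 \<longrightarrow> \<bar>w v - w v'\<bar> \<le> \<eta>)) \<longrightarrow>
      (\<forall>s u. 0 \<le> s \<longrightarrow> s \<le> u \<longrightarrow> u \<le> T \<longrightarrow> u - s < \<rho>1 \<longrightarrow> cmod (eloc x w s u) \<le> \<epsilon> * ((u - s) + (w u - w s)\<^sup>2))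
      \<and> (\<forall>v\<in>{0..T}. \<forall>v'\<in>{0..T}. \<bar>v - v'\<bar> < \<rho>1 \<longrightarrow> cmod (h v * q' (x v) - h v' * q' (x v')) \<le> \<epsilon>)"
    using local_est[OF K(1) \<epsilon>] by blast
  obtain \<rho>' where \<rho>': "\<rho>' > 0"
    and B2m: "{\<omega>\<in>space M. \<exists>s\<in>QT T. \<exists>s'\<in>QT T. \<bar>s - s'\<bar> \<le> \<rho>' \<and> \<eta> < \<bar>W s \<omega> - W s' \<omega>\<bar>} \<in> sets M"
    and B2p: "measure M {\<omega>\<in>space M. \<exists>s\<in>QT T. \<exists>s'\<in>QT T. \<bar>s - s'\<bar> \<le> \<rho>' \<and> \<eta> < \<bar>W s \<omega> - W s' \<omega>\<bar>} \<le> \<epsilon>0 / 4"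
    using osc_event[OF P T Wm Wc e4 \<eta>] by blast
  define \<rho>0 where "\<rho>0 = min \<rho> \<rho>'"
  have \<rho>0: "\<rho>0 > 0" "\<rho>0 \<le> \<rho>" "\<rho>0 \<le> \<rho>'" unfolding \<rho>0_def using \<rho> \<rho>' by auto
  define m where "m = nat \<lceil>(T - t) / \<rho>0\<rceil> + 1"
  have m1: "m \<ge> 1" unfolding m_def by simp
  have mpos: "real m > 0" using m1 by simp
  have m\<rho>: "(T - t) / real m < \<rho>0"
  proof -
    have "(T - t) / \<rho>0 < real m" unfolding m_def by linarith
    then show ?thesis using \<rho>0(1) mpos by (simp add: field_simps)
  qed
  define \<theta> where "\<theta> = \<epsilon>0 / ((c\<^sup>2 * G + 1) * real m)"
  have cG: "c\<^sup>2 * G + 1 > 0" using G(1) by (simp add: add_nonneg_pos)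
  have \<theta>: "\<theta> > 0" unfolding \<theta>_def using e0 cG mpos by simp
  define \<delta> where "\<delta> = min \<rho>0 (\<epsilon>0 * min 1 (\<theta>\<^sup>2) / (16 * (T + 1) * (real m + 1)))"
  have \<delta>: "\<delta> > 0" "\<delta> \<le> \<rho>0" "\<delta> \<le> \<epsilon>0 * min 1 (\<theta>\<^sup>2) / (16 * (T + 1) * (real m + 1))"
    unfolding \<delta>_def using \<rho>0 e0 \<theta> T by auto
  show ?thesis
  proof (intro exI[of _ \<delta>] conjI \<delta>(1) allI impI)
    fix \<tau> :: "nat \<Rightarrow> real" and n
    assume H: "is_partition \<tau> n t T \<and> (\<forall>i<n. \<tau> (Suc i) - \<tau> i < \<delta>)"
    then have t0: "\<tau> 0 = t" and tn: "\<tau> n = T" and inc: "\<forall>i<n. \<tau> i < \<tau> (Suc i)"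
      and mesh: "\<forall>i<n. \<tau> (Suc i) - \<tau> i < \<delta>" unfolding is_partition_def by auto
    have meshle: "\<forall>i<n. \<tau> (Suc i) - \<tau> i \<le> \<delta>" using mesh by (simp add: less_imp_le)
    have rng: "\<tau> i \<in> {t..T}" if "i \<le> n" for i
      using tau_mono[OF inc, of 0 i] tau_mono[OF inc, of i n] that t0 tn by auto
    have rng': "\<tau> i \<in> {t..<T}" if "i < n" for i
      using rng[of i] tau_mono[OF inc, of "Suc i" n] inc that tn by fastforce
    define Y where "Y = (\<lambda>i \<omega>. (W (\<tau> (Suc i)) \<omega> - W (\<tau> i) \<omega>)\<^sup>2 - (\<tau> (Suc i) - \<tau> i))"
    define kf where "kf = (\<lambda>i. nat \<lfloor>(\<tau> i - t) * real m / (T - t)\<rfloor>)"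
    define Sk where "Sk = (\<lambda>k. {i. i \<in> {..<n} \<and> kf i = k})"
    define \<sigma> where "\<sigma> = (\<lambda>k::nat. t + real k * (T - t) / real m)"
    have kf: "kf i < m \<and> \<sigma> (kf i) \<le> \<tau> i \<and> \<tau> i < \<sigma> (Suc (kf i))" if "i < n" for i
      using block_index[of t T m \<tau> i, OF t(2) m1 rng'[OF that]] unfolding kf_def \<sigma>_def by auto
    have \<sigma>rng: "\<sigma> k \<in> {0..T}" if "k \<le> m" for k
    proof -
      have "real k * (T - t) / real m \<le> real m * (T - t) / real m"
        using that t mpos by (intro divide_right_mono mult_right_mono) auto
      moreover have "real k * (T - t) / real m \<ge> 0" using t mpos by simp
      ultimately show ?thesis unfolding \<sigma>_def using t mpos by auto
    qed
    have \<sigma>step: "\<sigma> (Suc k) - \<sigma> k = (T - t) / real m" for k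
      unfolding \<sigma>_def by (simp add: diff_divide_distrib[symmetric] algebra_simps)
    have bdist: "\<bar>\<tau> i - \<sigma> (kf i)\<bar> < \<rho>0" if "i < n" for i
      using kf[OF that] \<sigma>step[of "kf i"] m\<rho> by auto
    have tpos: "0 \<le> \<tau> 0" using t0 t by simp
    have Ym: "(\<lambda>\<omega>. \<Sum>i\<in>S. Y i \<omega>) \<in> borel_measurable M" if "S \<subseteq> {..<n}" for S
    proof -
      have "W (\<tau> i) \<in> borel_measurable M" if "i \<le> n" for i using Wm rng[OF that] t by auto
      then show ?thesis unfolding Y_def using that
        by (intro borel_measurable_sum borel_measurable_diff borel_measurable_power borel_measurable_const) auto
    qed
    define B1 where "B1 = {\<omega>\<in>space M. \<exists>s\<in>QT T. K0 < \<bar>X s \<omega>\<bar>}"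
    define B2 where "B2 = {\<omega>\<in>space M. \<exists>s\<in>QT T. \<exists>s'\<in>QT T. \<bar>s - s'\<bar> \<le> \<rho>' \<and> \<eta> < \<bar>W s \<omega> - W s' \<omega>\<bar>}"
    define B3 where "B3 = {\<omega>\<in>space M. 1 \<le> \<bar>\<Sum>i<n. Y i \<omega>\<bar>}"
    define B4 where "B4 = (\<lambda>k. {\<omega>\<in>space M. \<theta> \<le> \<bar>\<Sum>i\<in>Sk k. Y i \<omega>\<bar>})"
    have Sksub: "Sk k \<subseteq> {..<n}" for k unfolding Sk_def by auto
    have B3m: "B3 \<in> sets M"
    proof -
      have [measurable]: "(\<lambda>\<omega>. \<Sum>i<n. Y i \<omega>) \<in> borel_measurable M" using Ym[of "{..<n}"] by simp
      show ?thesis unfolding B3_def by measurable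
    qed
    have B4m: "B4 k \<in> sets M" for k
    proof -
      have [measurable]: "(\<lambda>\<omega>. \<Sum>i\<in>Sk k. Y i \<omega>) \<in> borel_measurable M" using Ym[OF Sksub] .
      show ?thesis unfolding B4_def by measurable
    qed
    have mT: "2 * \<delta> * (T - t) \<le> \<epsilon>0 * min 1 (\<theta>\<^sup>2) / (8 * (real m + 1))"
    proof -
      have "2 * \<delta> * (T - t) \<le> 2 * (\<epsilon>0 * min 1 (\<theta>\<^sup>2) / (16 * (T + 1) * (real m + 1))) * (T + 1)"
        using \<delta> t by (intro mult_mono) auto
      also have "\<dots> = \<epsilon>0 * min 1 (\<theta>\<^sup>2) / (8 * (real m + 1))"
      proof -
        have gen: "B \<noteq> 0 \<Longrightarrow> C \<noteq> 0 \<Longrightarrow> 2 * (A / (16 * B * C)) * B = A / (8 * C)" for A B C :: real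
          by (simp add: field_simps)
        show ?thesis by (rule gen) (use T in auto)
      qed
      finally show ?thesis .
    qed
    have B3p: "measure M B3 \<le> \<epsilon>0 / 8"
    proof -
      have "measure M B3 \<le> 2 * \<delta> * (\<tau> n - \<tau> 0) / 1\<^sup>2"
        unfolding B3_def Y_def by (rule qv_prob[OF BM tpos inc subset_refl _ meshle]) simp
      also have "\<dots> = 2 * \<delta> * (T - t)" using t0 tn by simp
      also have "\<dots> \<le> \<epsilon>0 * min 1 (\<theta>\<^sup>2) / (8 * (real m + 1))" by (rule mT)
      also have "\<dots> \<le> \<epsilon>0 * 1 / (8 * 1)"
        using e0 by (intro frac_le mult_left_mono) auto
      finally show ?thesis by simp
    qed
    have B4p: "measure M (B4 k) \<le> \<epsilon>0 / (8 * real m)" for k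
    proof -
      have "measure M (B4 k) \<le> 2 * \<delta> * (\<tau> n - \<tau> 0) / \<theta>\<^sup>2"
        unfolding B4_def Y_def by (rule qv_prob[OF BM tpos inc Sksub \<theta> meshle])
      also have "\<dots> = 2 * \<delta> * (T - t) / \<theta>\<^sup>2" using t0 tn by simp
      also have "\<dots> \<le> \<epsilon>0 * min 1 (\<theta>\<^sup>2) / (8 * (real m + 1)) / \<theta>\<^sup>2"
        using mT \<theta> by (intro divide_right_mono) auto
      also have "\<dots> \<le> \<epsilon>0 * \<theta>\<^sup>2 / (8 * (real m + 1)) / \<theta>\<^sup>2"
        using e0 \<theta> by (intro divide_right_mono mult_left_mono) auto
      also have "\<dots> = \<epsilon>0 / (8 * (real m + 1))" using \<theta> by simp
      also have "\<dots> \<le> \<epsilon>0 / (8 * real m)" using e0 mpos by (intro divide_left_mono) auto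
      finally show ?thesis .
    qed
    have incl: "{\<omega>\<in>space M. \<epsilon>0 \<le> cmod (ito_sum W (\<lambda>s \<omega>. h s * (of_real c * q (X s \<omega>))) \<tau> n \<omega>
        - (integral {t..T} (\<lambda>s. h s * r1 (X s \<omega>) - h' s * r2 (X s \<omega>)) + h T * r2 (X T \<omega>) - h t * r2 (X t \<omega>)))} \<subseteq> B1 \<union> B2 \<union> B3 \<union> (\<Union>k<m. B4 k)"
    proof (rule subsetI, rule ccontr)
      fix \<omega> assume wb: "\<omega> \<in> {\<omega>\<in>space M. \<epsilon>0 \<le> cmod (ito_sum W (\<lambda>s \<omega>. h s * (of_real c * q (X s \<omega>))) \<tau> n \<omega>
        - (integral {t..T} (\<lambda>s. h s * r1 (X s \<omega>) - h' s * r2 (X s \<omega>)) + h T * r2 (X T \<omega>) - h t * r2 (X t \<omega>)))}" and nb: "\<omega> \<notin> B1 \<union> B2 \<union> B3 \<union> (\<Union>k<m. B4 k)"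
      have ws: "\<omega> \<in> space M" using wb by simp
      have big: "\<epsilon>0 \<le> cmod (ito_sum W (\<lambda>s \<omega>. h s * (of_real c * q (X s \<omega>))) \<tau> n \<omega>
        - (integral {t..T} (\<lambda>s. h s * r1 (X s \<omega>) - h' s * r2 (X s \<omega>)) + h T * r2 (X T \<omega>) - h t * r2 (X t \<omega>)))"
        using wb by simp
      have nB1: "\<forall>s\<in>QT T. \<bar>X s \<omega>\<bar> \<le> K0" using nb ws unfolding B1_def by force
      have nB2: "\<forall>s\<in>QT T. \<forall>s'\<in>QT T. \<bar>s - s'\<bar> \<le> \<rho>' \<longrightarrow> \<bar>W s \<omega> - W s' \<omega>\<bar> \<le> \<eta>"
        using nb ws unfolding B2_def by force
      have nB3: "\<bar>\<Sum>i<n. Y i \<omega>\<bar> < 1" using nb ws unfolding B3_def by force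
      have nB4: "\<bar>\<Sum>i\<in>Sk k. Y i \<omega>\<bar> < \<theta>" if "k < m" for k using nb ws that unfolding B4_def by force
      define x where "x = (\<lambda>s. X s \<omega>)"
      define w where "w = (\<lambda>s. W s \<omega>)"
      have xc: "continuous_on {0..T} x" using X_cont ws unfolding x_def by auto
      have xb0: "\<forall>s\<in>{0..T}. \<bar>x s\<bar> \<le> K0" unfolding x_def by (rule bound_extend[OF T _ nB1]) (use X_cont ws in auto)
      have xb: "\<forall>s\<in>{0..T}. \<bar>x s\<bar> \<le> K" using xb0 K(2) by force
      have wo: "\<forall>v\<in>{0..T}. \<forall>v'\<in>{0..T}. \<bar>v - v'\<bar> < \<rho>0 \<longrightarrow> \<bar>w v - w v'\<bar> \<le> \<eta>"
      proof (intro ballI impI)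
        fix v v' assume v: "v \<in> {0..T}" "v' \<in> {0..T}" "\<bar>v - v'\<bar> < \<rho>0"
        show "\<bar>w v - w v'\<bar> \<le> \<eta>" unfolding w_def
          by (rule osc_extend[OF T _ nB2 v(1,2)]) (use Wc ws v(3) \<rho>0 in auto)
      qed
      have incr: "\<forall>s\<in>{0..T}. \<forall>u\<in>{0..T}. s \<le> u \<longrightarrow> x u - x s = integral {s..u} (\<lambda>v. a + b * x v) + c * (w u - w s)"
        using X_incr ws unfolding x_def w_def by auto
      have Hw: "0 < \<rho>0 \<and> \<rho>0 \<le> \<rho> \<and> (continuous_on {0..T} x
        \<and> (\<forall>s\<in>{0..T}. \<forall>u\<in>{0..T}. s \<le> u \<longrightarrow> x u - x s = integral {s..u} (\<lambda>v. a + b * x v) + c * (w u - w s))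
        \<and> (\<forall>s\<in>{0..T}. \<bar>x s\<bar> \<le> K)
        \<and> (\<forall>v\<in>{0..T}. \<forall>v'\<in>{0..T}. \<bar>v - v'\<bar> < \<rho>0 \<longrightarrow> \<bar>w v - w v'\<bar> \<le> \<eta>))"
        using \<rho>0 xc incr xb wo by blast
      note LEw = mp[OF LE[THEN spec[where x=\<rho>0], THEN spec[where x=x], THEN spec[where x=w]] Hw]
      then have C1: "\<forall>s u. 0 \<le> s \<longrightarrow> s \<le> u \<longrightarrow> u \<le> T \<longrightarrow> u - s < \<rho>0 \<longrightarrow> cmod (eloc x w s u) \<le> \<epsilon> * ((u - s) + (w u - w s)\<^sup>2)"
        and C2: "\<forall>v\<in>{0..T}. \<forall>v'\<in>{0..T}. \<bar>v - v'\<bar> < \<rho>0 \<longrightarrow> cmod (h v * q' (x v) - h v' * q' (x v')) \<le> \<epsilon>"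
        by auto
      define D where "D = (\<lambda>i. w (\<tau> (Suc i)) - w (\<tau> i))"
      define \<Delta> where "\<Delta> = (\<lambda>i. \<tau> (Suc i) - \<tau> i)"
      define g where "g = (\<lambda>v. h v * q' (x v))"
      have Yw: "Y i \<omega> = (D i)\<^sup>2 - \<Delta> i" for i unfolding Y_def D_def \<Delta>_def w_def by simp
      have \<Delta>0: "\<Delta> i \<ge> 0" if "i < n" for i using inc that unfolding \<Delta>_def by (simp add: less_imp_le)
      have sum\<Delta>: "(\<Sum>i<n. \<Delta> i) = T - t" unfolding \<Delta>_def using sum_lessThan_telescope[of \<tau> n] t0 tn by simp
      have QV: "(\<Sum>i<n. (D i)\<^sup>2) = (\<Sum>i<n. Y i \<omega>) + (T - t)"
        unfolding Yw sum_subtractf sum\<Delta> by simp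
      have QVb: "(\<Sum>i<n. (D i)\<^sup>2) \<le> Lb" using QV nB3 unfolding Lb_def by linarith
      have eb: "cmod (eloc x w (\<tau> i) (\<tau> (Suc i))) \<le> \<epsilon> * (\<Delta> i + (D i)\<^sup>2)" if "i < n" for i
      proof -
        have "0 \<le> \<tau> i" "\<tau> i \<le> \<tau> (Suc i)" "\<tau> (Suc i) \<le> T" "\<tau> (Suc i) - \<tau> i < \<rho>0"
          using rng[of i] rng[of "Suc i"] that inc mesh \<delta>(2) t by (auto simp: less_imp_le)
        then show ?thesis using C1 unfolding \<Delta>_def D_def by blast
      qed
      have SE: "cmod (\<Sum>i<n. eloc x w (\<tau> i) (\<tau> (Suc i))) \<le> 2 * \<epsilon> * Lb"
      proof -
        have "cmod (\<Sum>i<n. eloc x w (\<tau> i) (\<tau> (Suc i))) \<le> (\<Sum>i<n. \<epsilon> * (\<Delta> i + (D i)\<^sup>2))"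
          by (rule order_trans[OF norm_sum sum_mono]) (use eb in auto)
        also have "\<dots> = \<epsilon> * ((T - t) + (\<Sum>i<n. (D i)\<^sup>2))"
          by (simp add: sum_distrib_left[symmetric] sum.distrib sum\<Delta>)
        also have "\<dots> \<le> \<epsilon> * (Lb + Lb)" using Lb QVb \<epsilon> by (intro mult_left_mono) auto
        finally show ?thesis by simp
      qed
      have Yabs: "\<bar>Y i \<omega>\<bar> \<le> (D i)\<^sup>2 + \<Delta> i" if "i < n" for i
        unfolding Yw using \<Delta>0[OF that] zero_le_power2[of "D i"] by (simp add: abs_le_iff)
      have gb: "cmod (g v) \<le> G" if "v \<in> {0..T}" for v using G(2) xb that unfolding g_def by blast
      have Bsplit: "(\<Sum>i<n. g (\<tau> i) * of_real (Y i \<omega>)) =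
          (\<Sum>i<n. (g (\<tau> i) - g (\<sigma> (kf i))) * of_real (Y i \<omega>)) + (\<Sum>k<m. g (\<sigma> k) * of_real (\<Sum>i\<in>Sk k. Y i \<omega>))"
      proof -
        have "(\<Sum>i<n. g (\<tau> i) * of_real (Y i \<omega>)) =
            (\<Sum>i<n. (g (\<tau> i) - g (\<sigma> (kf i))) * of_real (Y i \<omega>)) + (\<Sum>i<n. g (\<sigma> (kf i)) * of_real (Y i \<omega>))"
          by (simp add: sum.distrib[symmetric] algebra_simps)
        moreover have "(\<Sum>i<n. g (\<sigma> (kf i)) * of_real (Y i \<omega>)) = (\<Sum>k<m. \<Sum>i\<in>Sk k. g (\<sigma> (kf i)) * of_real (Y i \<omega>))"
          unfolding Sk_def by (rule sum.group[symmetric]) (use kf in auto)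
        moreover have "(\<Sum>i\<in>Sk k. g (\<sigma> (kf i)) * of_real (Y i \<omega>)) = g (\<sigma> k) * of_real (\<Sum>i\<in>Sk k. Y i \<omega>)" for k
          by (simp add: Sk_def sum_distrib_left)
        ultimately show ?thesis by simp
      qed
      have QB1: "cmod (\<Sum>i<n. (g (\<tau> i) - g (\<sigma> (kf i))) * of_real (Y i \<omega>)) \<le> 2 * \<epsilon> * Lb"
      proof -
        have "cmod (\<Sum>i<n. (g (\<tau> i) - g (\<sigma> (kf i))) * of_real (Y i \<omega>)) \<le> (\<Sum>i<n. \<epsilon> * ((D i)\<^sup>2 + \<Delta> i))"
        proof (rule order_trans[OF norm_sum sum_mono])
          fix i assume i: "i \<in> {..<n}"
          have "cmod (g (\<tau> i) - g (\<sigma> (kf i))) \<le> \<epsilon>"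
            using C2 rng[of i] \<sigma>rng[of "kf i"] kf[of i] bdist[of i] i t unfolding g_def by auto
          then show "cmod ((g (\<tau> i) - g (\<sigma> (kf i))) * of_real (Y i \<omega>)) \<le> \<epsilon> * ((D i)\<^sup>2 + \<Delta> i)"
            unfolding norm_mult norm_of_real using Yabs[of i] i \<epsilon> by (intro mult_mono) auto
        qed
        also have "\<dots> = \<epsilon> * ((\<Sum>i<n. (D i)\<^sup>2) + (T - t))"
          by (simp add: sum_distrib_left[symmetric] sum.distrib sum\<Delta>)
        also have "\<dots> \<le> \<epsilon> * (Lb + Lb)" using Lb QVb \<epsilon> by (intro mult_left_mono) auto
        finally show ?thesis by simp
      qed
      have QB2: "cmod (\<Sum>k<m. g (\<sigma> k) * of_real (\<Sum>i\<in>Sk k. Y i \<omega>)) \<le> real m * (G * \<theta>)"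
      proof -
        have "cmod (\<Sum>k<m. g (\<sigma> k) * of_real (\<Sum>i\<in>Sk k. Y i \<omega>)) \<le> (\<Sum>k<m. G * \<theta>)"
        proof (rule order_trans[OF norm_sum sum_mono])
          fix k assume k: "k \<in> {..<m}"
          show "cmod (g (\<sigma> k) * of_real (\<Sum>i\<in>Sk k. Y i \<omega>)) \<le> G * \<theta>"
            unfolding norm_mult norm_of_real using gb[OF \<sigma>rng[of k]] nB4[of k] k G(1)
            by (intro mult_mono) auto
        qed
        then show ?thesis by simp
      qed
      have dec: "ito_sum W (\<lambda>s \<omega>. h s * (of_real c * q (X s \<omega>))) \<tau> n \<omega>
        - (integral {t..T} (\<lambda>s. h s * r1 (X s \<omega>) - h' s * r2 (X s \<omega>)) + h T * r2 (X T \<omega>) - h t * r2 (X t \<omega>))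
        = (\<Sum>i<n. eloc x w (\<tau> i) (\<tau> (Suc i))) - of_real (c\<^sup>2 / 2) * (\<Sum>i<n. g (\<tau> i) * of_real (Y i \<omega>))"
        using decomp[OF xc t(1) _ t0 tn inc, of w] t(2)
        unfolding ito_sum_def x_def w_def g_def Y_def by simp
      have "cmod (ito_sum W (\<lambda>s \<omega>. h s * (of_real c * q (X s \<omega>))) \<tau> n \<omega>
        - (integral {t..T} (\<lambda>s. h s * r1 (X s \<omega>) - h' s * r2 (X s \<omega>)) + h T * r2 (X T \<omega>) - h t * r2 (X t \<omega>)))
        \<le> 2 * \<epsilon> * Lb + c\<^sup>2 / 2 * (2 * \<epsilon> * Lb + real m * (G * \<theta>))"
      proof -
        have "cmod (of_real (c\<^sup>2 / 2) * (\<Sum>i<n. g (\<tau> i) * of_real (Y i \<omega>))) \<le> c\<^sup>2 / 2 * (2 * \<epsilon> * Lb + real m * (G * \<theta>))"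
        proof -
          have n2: "cmod ((\<Sum>i<n. (g (\<tau> i) - g (\<sigma> (kf i))) * of_real (Y i \<omega>)) + (\<Sum>k<m. g (\<sigma> k) * of_real (\<Sum>i\<in>Sk k. Y i \<omega>)))
              \<le> 2 * \<epsilon> * Lb + real m * (G * \<theta>)"
            by (rule order_trans[OF norm_triangle_ineq add_mono[OF QB1 QB2]])
          show ?thesis unfolding norm_mult norm_of_real Bsplit
            using mult_left_mono[OF n2, of "c\<^sup>2 / 2"] by simp
        qed
        then show ?thesis unfolding dec using SE norm_triangle_ineq4 by (smt (verit))
      qed
      also have "\<dots> < \<epsilon>0"
      proof -
        have a1: "2 * \<epsilon> * Lb + c\<^sup>2 / 2 * (2 * \<epsilon> * Lb) = 2 * \<epsilon> * Lb * (1 + c\<^sup>2) - c\<^sup>2 * \<epsilon> * Lb"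
          by (simp add: algebra_simps)
        have a2: "c\<^sup>2 * \<epsilon> * Lb \<ge> 0" using \<epsilon> Lb by simp
        define P where "P = c\<^sup>2 * G"
        have P1: "P + 1 > 0" "P + 1 \<noteq> 0" "real m \<noteq> 0" unfolding P_def using cG mpos by auto
        have tm: "real m * \<theta> = \<epsilon>0 / (P + 1)"
          unfolding \<theta>_def P_def[symmetric] using P1 by simp
        have a3: "c\<^sup>2 / 2 * (real m * (G * \<theta>)) = P * (\<epsilon>0 / (P + 1)) / 2"
        proof -
          have e: "c\<^sup>2 / 2 * (real m * (G * \<theta>)) = P * (real m * \<theta>) / 2"
            unfolding P_def by (simp add: algebra_simps)
          show ?thesis unfolding e tm ..
        qed
        have a4: "P * (\<epsilon>0 / (P + 1)) / 2 < \<epsilon>0 / 2"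
          using P1 e0 by (simp add: field_simps)
        have a0: "2 * \<epsilon> * Lb + c\<^sup>2 / 2 * (2 * \<epsilon> * Lb + real m * (G * \<theta>))
            = (2 * \<epsilon> * Lb + c\<^sup>2 / 2 * (2 * \<epsilon> * Lb)) + c\<^sup>2 / 2 * (real m * (G * \<theta>))"
          by (simp add: algebra_simps)
        show ?thesis using a0 a1 a2 a3 a4 \<epsilon>eq by linarith
      qed
      finally show False using big by simp
    qed
    have U: "B1 \<union> B2 \<union> B3 \<union> (\<Union>k<m. B4 k) \<in> sets M"
      using B1m B2m B3m B4m unfolding B1_def B2_def by auto
    have f1: "measure M {\<omega>\<in>space M. \<epsilon>0 \<le> cmod (ito_sum W (\<lambda>s \<omega>. h s * (of_real c * q (X s \<omega>))) \<tau> n \<omega>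
        - (integral {t..T} (\<lambda>s. h s * r1 (X s \<omega>) - h' s * r2 (X s \<omega>)) + h T * r2 (X T \<omega>) - h t * r2 (X t \<omega>)))} \<le> measure M (B1 \<union> B2 \<union> B3 \<union> (\<Union>k<m. B4 k))"
      by (rule finite_measure_mono[OF incl U])
    have f2: "measure M (B1 \<union> B2 \<union> B3 \<union> (\<Union>k<m. B4 k)) \<le> measure M (B1 \<union> B2 \<union> B3) + measure M (\<Union>k<m. B4 k)"
      using B1m B2m B3m B4m unfolding B1_def B2_def by (intro measure_Un_le) auto
    have f3: "measure M (B1 \<union> B2 \<union> B3) \<le> measure M (B1 \<union> B2) + measure M B3"
      using B1m B2m B3m unfolding B1_def B2_def by (intro measure_Un_le) auto
    have f4: "measure M (B1 \<union> B2) \<le> measure M B1 + measure M B2"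
      using B1m B2m unfolding B1_def B2_def by (intro measure_Un_le) auto
    have f5: "measure M (\<Union>k<m. B4 k) \<le> (\<Sum>k<m. measure M (B4 k))"
      using B4m by (intro finite_measure_subadditive_finite) auto
    have f6: "(\<Sum>k<m. measure M (B4 k)) \<le> (\<Sum>k<m. \<epsilon>0 / (8 * real m))"
      by (intro sum_mono B4p)
    have f7: "(\<Sum>k<m. \<epsilon>0 / (8 * real m)) = \<epsilon>0 / 8" using mpos by simp
    have B1p': "measure M B1 \<le> \<epsilon>0 / 4" using B1p unfolding B1_def .
    have B2p': "measure M B2 \<le> \<epsilon>0 / 4" using B2p unfolding B2_def .
    show "measure M {\<omega>\<in>space M. \<epsilon>0 \<le> cmod (ito_sum W (\<lambda>s \<omega>. h s * (of_real c * q (X s \<omega>))) \<tau> n \<omega>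
        - (integral {t..T} (\<lambda>s. h s * r1 (X s \<omega>) - h' s * r2 (X s \<omega>)) + h T * r2 (X T \<omega>) - h t * r2 (X t \<omega>)))} \<le> \<epsilon>0"
      using f1 f2 f3 f4 f5 f6 f7 B1p' B2p' B3p e0 by linarith

  qed
qed

end

theorem lemmaA1:
  fixes M :: "'a measure" and W X :: "real \<Rightarrow> 'a \<Rightarrow> real"
    and a b c X0 T t :: real and \<alpha> :: "nat \<Rightarrow> complex" and h h' :: "real \<Rightarrow> complex"
    and p r1 r2 :: "real \<Rightarrow> complex"
  assumes BM: "brownian_motion M W"
    and c: "c \<noteq> 0" and T: "T > 0"
    and X_meas: "\<forall>s\<in>{0..T}. X s \<in> borel_measurable M"
    and X_cont: "\<forall>\<omega>\<in>space M. continuous_on {0..T} (\<lambda>s. X s \<omega>)"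
    and X_sde: "\<forall>\<omega>\<in>space M. \<forall>s\<in>{0..T}.
                  X s \<omega> = X0 + integral {0..s} (\<lambda>u. a + b * X u \<omega>) + c * W s \<omega>"
    and rad: "conv_radius \<alpha> = \<infinity>"
    and p_def: "p = pseries \<alpha>"
    and r1_def: "\<And>x. r1 x = - (1 / complex_of_real c) *
                   (complex_of_real (a + b * x) * p x
                    + complex_of_real (c\<^sup>2 / 2) * vector_derivative p (at x))"
    and r2_def: "\<And>x. r2 x = (1 / complex_of_real c) *
                   interval_lebesgue_integral lborel (ereal 0) (ereal x) p"
    and h_deriv: "\<forall>s\<in>{0..T}. (h has_vector_derivative h' s) (at s within {0..T})"
    and h'_cont: "continuous_on {0..T} h'"
    and t: "0 \<le> t" "t \<le> T"
  shows "(\<exists>\<beta>. conv_radius \<beta> = \<infinity> \<and> r1 = pseries \<beta>)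
       \<and> (\<exists>\<beta>. conv_radius \<beta> = \<infinity> \<and> r2 = pseries \<beta>)
       \<and> has_ito_integral M W (\<lambda>s \<omega>. h s * p (X s \<omega>)) t T
           (\<lambda>\<omega>. integral {t..T} (\<lambda>s. h s * r1 (X s \<omega>) - h' s * r2 (X s \<omega>))
                 + h T * r2 (X T \<omega>) - h t * r2 (X t \<omega>))"
proof -
  have P: "prob_space M" using BM unfolding brownian_motion_def by auto
  interpret prob_space M by (rule P)
  define pd where "pd = pseries (diffs \<alpha>)"
  have radd: "conv_radius (diffs \<alpha>) = \<infinity>" by (rule ps_diffs_rad[OF rad])
  have pder: "(p has_vector_derivative pd y) (at y within S)" for y S
    unfolding p_def pd_def by (rule ps_deriv[OF rad])
  have vdp: "vector_derivative p (at y) = pd y" for y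
    unfolding p_def pd_def by (rule ps_vd[OF rad])
  have pcont: "continuous_on S p" for S unfolding p_def by (rule ps_cont[OF rad])
  have pdcont: "continuous_on S pd" for S unfolding pd_def by (rule ps_cont[OF radd])
  have r2eq: "r2 y = (1 / complex_of_real c) * pseries (antid \<alpha>) y" for y
    using r2_def[of y] r2_char[OF rad, of y] unfolding p_def by simp
  define q where "q = (\<lambda>y. (1 / complex_of_real c) * p y)"
  define q' where "q' = (\<lambda>y. (1 / complex_of_real c) * pd y)"
  have cne: "complex_of_real c \<noteq> 0" using c by simp
  have qp: "complex_of_real c * q y = p y" for y unfolding q_def using cne by simp
  interpret L: itoset a b c T h h' r2 q q' r1
  proof
    show "c \<noteq> 0" by (rule c)
    show "T > 0" by (rule T)
    fix y
    have "r2 = (\<lambda>y. (1 / complex_of_real c) * pseries (antid \<alpha>) y)" using r2eq by auto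
    moreover have "((\<lambda>y. (1 / complex_of_real c) * pseries (antid \<alpha>) y) has_vector_derivative q y) (at y)"
      unfolding q_def p_def
      using has_vector_derivative_mult_right[OF ps_deriv[OF antid_rad[OF rad]], of "1 / complex_of_real c" y UNIV]
      by (simp add: diffs_antid)
    ultimately show "(r2 has_vector_derivative q y) (at y)" by simp
    show "(q has_vector_derivative q' y) (at y)"
      unfolding q_def q'_def by (rule has_vector_derivative_mult_right[OF pder[of y UNIV, simplified]])
    show "r1 y = - (complex_of_real (a + b * y) * q y + complex_of_real (c\<^sup>2 / 2) * q' y)"
      unfolding r1_def q_def q'_def vdp by (simp add: algebra_simps)
  next
    show "continuous_on UNIV q'" unfolding q'_def by (intro continuous_intros pdcont)
  next
    fix s assume "s \<in> {0..T}"
    then show "(h has_vector_derivative h' s) (at s within {0..T})" using h_deriv by auto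
  next
    show "continuous_on {0..T} h'" by (rule h'_cont)
  qed
  define \<beta>1 where "\<beta>1 = (\<lambda>n. - (1 / complex_of_real c) * (complex_of_real a * \<alpha> n
       + complex_of_real b * (if n = 0 then 0 else \<alpha> (n - 1)) + complex_of_real (c\<^sup>2 / 2) * diffs \<alpha> n))"
  have part1: "\<exists>\<beta>. conv_radius \<beta> = \<infinity> \<and> r1 = pseries \<beta>"
  proof (intro exI[of _ \<beta>1] conjI)
    show "conv_radius \<beta>1 = \<infinity>"
      by (rule conv_radius_inftyI'') (use r1_sums[OF rad] in \<open>auto simp: \<beta>1_def sums_iff\<close>)
    show "r1 = pseries \<beta>1"
    proof
      fix x
      have "pseries \<beta>1 x = - (1 / complex_of_real c) * (complex_of_real a * p x
          + complex_of_real b * (complex_of_real x * p x) + complex_of_real (c\<^sup>2 / 2) * pd x)"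
        using r1_sums[OF rad, where a=a and b=b and c=c and z="complex_of_real x"]
        unfolding pseries_def p_def pd_def \<beta>1_def by (simp add: sums_iff)
      then show "r1 x = pseries \<beta>1 x" unfolding r1_def vdp by (simp add: algebra_simps)
    qed
  qed
  have part2: "\<exists>\<beta>. conv_radius \<beta> = \<infinity> \<and> r2 = pseries \<beta>"
  proof (intro exI[of _ "\<lambda>n. (1 / complex_of_real c) * antid \<alpha> n"] conjI)
    show "conv_radius (\<lambda>n. (1 / complex_of_real c) * antid \<alpha> n) = \<infinity>"
      by (rule conv_radius_inftyI'')
         (use summable_mult[OF ps_summable[OF antid_rad[OF rad]], of "1 / complex_of_real c"] in \<open>simp add: mult.assoc\<close>)
    show "r2 = pseries (\<lambda>n. (1 / complex_of_real c) * antid \<alpha> n)"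
    proof
      fix y show "r2 y = pseries (\<lambda>n. (1 / complex_of_real c) * antid \<alpha> n) y"
        unfolding r2eq by (rule pseries_scale[OF antid_rad[OF rad], symmetric])
    qed
  qed
  have r1c: "continuous_on S r1" for S
    using part1 ps_cont by metis
  have r2c: "continuous_on S r2" for S by (rule L.r2c)
  have Wm: "\<forall>s\<in>{0..T}. W s \<in> borel_measurable M" using BM unfolding brownian_motion_def by auto
  have Xm: "X s \<in> borel_measurable M" if "s \<in> {0..T}" for s using X_meas that by auto
  have X_incr: "\<forall>\<omega>\<in>space M. \<forall>s\<in>{0..T}. \<forall>u\<in>{0..T}. s \<le> u \<longrightarrow>
        X u \<omega> - X s \<omega> = integral {s..u} (\<lambda>v. a + b * X v \<omega>) + c * (W u \<omega> - W s \<omega>)"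
  proof (intro ballI impI)
    fix \<omega> s u assume w: "\<omega> \<in> space M" and s: "s \<in> {0..T}" and u: "u \<in> {0..T}" and su: "s \<le> u"
    have ci: "(\<lambda>v. a + b * X v \<omega>) integrable_on {0..u}"
      using X_cont w u by (intro integrable_continuous_interval continuous_intros) (auto intro: continuous_on_subset)
    have "integral {0..s} (\<lambda>v. a + b * X v \<omega>) + integral {s..u} (\<lambda>v. a + b * X v \<omega>) = integral {0..u} (\<lambda>v. a + b * X v \<omega>)"
      by (rule Henstock_Kurzweil_Integration.integral_combine[OF _ su ci]) (use s in auto)
    then show "X u \<omega> - X s \<omega> = integral {s..u} (\<lambda>v. a + b * X v \<omega>) + c * (W u \<omega> - W s \<omega>)"
      using X_sde w s u by (simp add: algebra_simps)
  qed
  have part3: "has_ito_integral M W (\<lambda>s \<omega>. h s * p (X s \<omega>)) t T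
           (\<lambda>\<omega>. integral {t..T} (\<lambda>s. h s * r1 (X s \<omega>) - h' s * r2 (X s \<omega>))
                 + h T * r2 (X T \<omega>) - h t * r2 (X t \<omega>))"
    unfolding has_ito_integral_def
  proof (intro conjI ballI allI impI)
    have mi: "(\<lambda>\<omega>. integral {t..T} (\<lambda>s. h s * r1 (X s \<omega>) - h' s * r2 (X s \<omega>))) \<in> borel_measurable M"
    proof (rule meas_integral[OF t(2)])
      show "\<forall>s\<in>{t..T}. (\<lambda>\<omega>. h s * r1 (X s \<omega>) - h' s * r2 (X s \<omega>)) \<in> borel_measurable M"
        using t by (auto intro!: borel_measurable_diff borel_measurable_times borel_measurable_const
              borel_measurable_continuous_on[OF r1c] borel_measurable_continuous_on[OF r2c] Xm)
      show "\<forall>\<omega>\<in>space M. continuous_on {t..T} (\<lambda>s. h s * r1 (X s \<omega>) - h' s * r2 (X s \<omega>))"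
      proof
        fix \<omega> assume w: "\<omega> \<in> space M"
        have sub: "{t..T} \<subseteq> {0..T}" using t by auto
        have xc: "continuous_on {t..T} (\<lambda>s. X s \<omega>)" using X_cont w continuous_on_subset[OF _ sub] by blast
        show "continuous_on {t..T} (\<lambda>s. h s * r1 (X s \<omega>) - h' s * r2 (X s \<omega>))"
          using continuous_on_subset[OF L.hc sub] continuous_on_subset[OF h'_cont sub]
          by (intro continuous_intros continuous_on_compose2[OF r1c xc] continuous_on_compose2[OF r2c xc]) auto
      qed
    qed
    show "(\<lambda>\<omega>. integral {t..T} (\<lambda>s. h s * r1 (X s \<omega>) - h' s * r2 (X s \<omega>)) + h T * r2 (X T \<omega>) - h t * r2 (X t \<omega>))
        \<in> borel_measurable M"
      using t T by (intro borel_measurable_diff borel_measurable_add mi borel_measurable_times borel_measurable_const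
              borel_measurable_continuous_on[OF r2c] Xm) auto
  next
    fix s assume "s \<in> {t..T}"
    then show "(\<lambda>\<omega>. h s * p (X s \<omega>)) \<in> borel_measurable M"
      using t by (intro borel_measurable_times borel_measurable_const borel_measurable_continuous_on[OF pcont] Xm) auto
  next
    fix \<epsilon> :: real assume e: "\<epsilon> > 0"
    show "\<exists>\<delta>>0. \<forall>\<tau> n. is_partition \<tau> n t T \<and> (\<forall>i<n. \<tau> (Suc i) - \<tau> i < \<delta>) \<longrightarrow>
        measure M {\<omega>\<in>space M. \<epsilon> \<le> cmod (ito_sum W (\<lambda>s \<omega>. h s * p (X s \<omega>)) \<tau> n \<omega> -
          (integral {t..T} (\<lambda>s. h s * r1 (X s \<omega>) - h' s * r2 (X s \<omega>)) + h T * r2 (X T \<omega>) - h t * r2 (X t \<omega>)))} \<le> \<epsilon>"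
    proof (cases "t = T")
      case True
      show ?thesis
      proof (intro exI[of _ 1] conjI allI impI)
        fix \<tau> :: "nat \<Rightarrow> real" and n
        assume H: "is_partition \<tau> n t T \<and> (\<forall>i<n. \<tau> (Suc i) - \<tau> i < 1)"
        have n0: "n = 0"
        proof (rule ccontr)
          assume "n \<noteq> 0"
          then have "\<tau> 0 < \<tau> 1" "\<tau> 1 \<le> \<tau> n" using H tau_mono[of n \<tau> 1 n] unfolding is_partition_def by auto
          then show False using H True unfolding is_partition_def by auto
        qed
        have "{\<omega>\<in>space M. \<epsilon> \<le> cmod (ito_sum W (\<lambda>s \<omega>. h s * p (X s \<omega>)) \<tau> n \<omega> -
          (integral {t..T} (\<lambda>s. h s * r1 (X s \<omega>) - h' s * r2 (X s \<omega>)) + h T * r2 (X T \<omega>) - h t * r2 (X t \<omega>)))} = {}"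
          using n0 True e by (auto simp: ito_sum_def)
        note E = this
        show "measure M {\<omega>\<in>space M. \<epsilon> \<le> cmod (ito_sum W (\<lambda>s \<omega>. h s * p (X s \<omega>)) \<tau> n \<omega> -
          (integral {t..T} (\<lambda>s. h s * r1 (X s \<omega>) - h' s * r2 (X s \<omega>)) + h T * r2 (X T \<omega>) - h t * r2 (X t \<omega>)))} \<le> \<epsilon>"
          unfolding E using e by simp
      qed simp
    next
      case False
      then have tT: "t < T" using t by simp
      have Heq: "(\<lambda>s \<omega>. h s * p (X s \<omega>)) = (\<lambda>s \<omega>. h s * (of_real c * q (X s \<omega>)))" using qp by simp
      show ?thesis unfolding Heq by (rule L.conv_main[OF BM X_meas X_cont X_incr t(1) tT e])
    qed
  qed
  show ?thesis using part1 part2 part3 by blast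
qed

end
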